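(* For each $n\ge1$, the number of spanning forests of $\Sigma_n$ equals $H_n(2,1)=H_{2,n}(2,1)+3N_n(2,1)+M_n(2,1)$, where, writing $H_2,N,M$ for $H_{2,n}(2,1),N_n(2,1),M_n(2,1)$, $$H_{2,n+1}(2,1)=3H_2^3+12H_2^2N+6H_2N^2,$$ $$N_{n+1}(2,1)=H_2^3+12H_2^2N+4H_2^2M+28H_2N^2+8H_2NM+14N^3+4N^2M,$$ $$M_{n+1}(2,1)=H_2^3+21H_2^2N+12H_2^2M+123H_2N^2+120H_2NM+24H_2M^2+173N^3+204N^2M+72NM^2+8M^3,$$ with $H_{2,1}(2,1)=3$, $N_1(2,1)=M_1(2,1)=1$.
   Context: Graphs are finite. For a graph $G$, a spanning subgraph $A$ has vertex set $V(G)$ and edge set $E(A)\subseteq E(G)$; $k(A)$ is its number of components, $r(A)=|V(G)|-k(A)$, $n(A)=|E(A)|-r(A)$; the weight of $A$ is $(x-1)^{r(G)-r(A)}(y-1)^{n(A)}$ and the Tutte polynomial $T(G;x,y)$ is the sum of the weights of all spanning subgraphs. The graphs $\Sigma_n$ ($n\ge1$; Schreier graphs of the Hanoi Towers group $H^{(3)}$ with loops removed) each have three outmost vertices top, left, right: $\Sigma_1$ is the triangle $K_3$; $\Sigma_{n+1}$ is the disjoint union of three copies $G_1,G_2,G_3$ of $\Sigma_n$ together with three new edges joining left$(G_1)$ to top$(G_2)$, right$(G_1)$ to top$(G_3)$, and right$(G_2)$ to left$(G_3)$; its outmost vertices are top$(G_1)$, left$(G_2)$, right$(G_3)$. $H_n=T(\Sigma_n;x,y)$.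 $H_{2,n}$ (resp. $H_{1,n}$, $H_{0,n}$) is the sum of the weights of the spanning subgraphs of $\Sigma_n$ in which the three outmost vertices lie in one component (resp. left and right outmost in one component, top in another; resp. the three in three distinct components). $N_n=H_{1,n}/(x-1)$ and $M_n=H_{0,n}/(x-1)^2$, which are polynomials. A spanning forest is an acyclic spanning subgraph. *)

theory Defs
  imports Complex_Main
begin

text \<open>Vertices of Sigma_n: words of length n over {0,1,2}; copy i of Sigma_n inside
Sigma_(n+1) consists of the words starting with i.  Outmost vertices:
top = 0^n, left = 1^n, right = 2^n.\<close>

fun sverts :: "nat \<Rightarrow> nat list set" where
  "sverts 0 = {[]}"
| "sverts (Suc n) = (\<Union>i\<in>{0,1,2}. Cons i ` sverts n)"

definition top_v :: "nat \<Rightarrow> nat list" where "top_v n = replicate n 0"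
definition left_v :: "nat \<Rightarrow> nat list" where "left_v n = replicate n 1"
definition right_v :: "nat \<Rightarrow> nat list" where "right_v n = replicate n 2"

fun sedges :: "nat \<Rightarrow> nat list set set" where
  "sedges 0 = {}"
| "sedges (Suc 0) = {{[0],[1]}, {[0],[2]}, {[1],[2]}}"
| "sedges (Suc (Suc n)) =
     (\<Union>i\<in>{0,1,2}. (\<lambda>e. Cons i ` e) ` sedges (Suc n)) \<union>
     {{0 # left_v (Suc n), 1 # top_v (Suc n)},
      {0 # right_v (Suc n), 2 # top_v (Suc n)},
      {1 # right_v (Suc n), 2 # left_v (Suc n)}}"

definition adj :: "'a set set \<Rightarrow> ('a \<times> 'a) set" where
  "adj A = {(u, v). {u, v} \<in> A}"

definition connected_in :: "'a set set \<Rightarrow> 'a \<Rightarrow> 'a \<Rightarrow> bool" where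
  "connected_in A u v \<longleftrightarrow> (u, v) \<in> (adj A)\<^sup>*"

definition ncomp :: "'a set \<Rightarrow> 'a set set \<Rightarrow> nat" where
  "ncomp V A = card ((\<lambda>v. {u \<in> V. connected_in A v u}) ` V)"

definition grank :: "'a set \<Rightarrow> 'a set set \<Rightarrow> nat" where
  "grank V A = card V - ncomp V A"

definition gnullity :: "'a set \<Rightarrow> 'a set set \<Rightarrow> nat" where
  "gnullity V A = card A - grank V A"

definition tweight :: "'a set \<Rightarrow> 'a set set \<Rightarrow> 'a set set \<Rightarrow> real \<Rightarrow> real \<Rightarrow> real" where
  "tweight V E A x y = (x - 1) ^ (grank V E - grank V A) * (y - 1) ^ gnullity V A"

definition tutte :: "'a set \<Rightarrow> 'a set set \<Rightarrow> real \<Rightarrow> real \<Rightarrow> real" where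
  "tutte V E x y = (\<Sum>A\<in>Pow E. tweight V E A x y)"

definition has_cycle :: "'a set set \<Rightarrow> bool" where
  "has_cycle A \<longleftrightarrow> (\<exists>vs. 3 \<le> length vs \<and> distinct vs \<and>
      (\<forall>i < length vs. {vs ! i, vs ! ((i + 1) mod length vs)} \<in> A))"

definition spanning_forests :: "'a set set \<Rightarrow> 'a set set set" where
  "spanning_forests E = {A. A \<subseteq> E \<and> \<not> has_cycle A}"

definition H :: "nat \<Rightarrow> real \<Rightarrow> real \<Rightarrow> real" where
  "H n x y = tutte (sverts n) (sedges n) x y"

definition H2 :: "nat \<Rightarrow> real \<Rightarrow> real \<Rightarrow> real" where
  "H2 n x y = (\<Sum>A | A \<subseteq> sedges n \<and> connected_in A (top_v n) (left_v n)
       \<and> connected_in A (top_v n) (right_v n). tweight (sverts n) (sedges n) A x y)"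

definition H1 :: "nat \<Rightarrow> real \<Rightarrow> real \<Rightarrow> real" where
  "H1 n x y = (\<Sum>A | A \<subseteq> sedges n \<and> connected_in A (left_v n) (right_v n)
       \<and> \<not> connected_in A (top_v n) (left_v n). tweight (sverts n) (sedges n) A x y)"

definition H0 :: "nat \<Rightarrow> real \<Rightarrow> real \<Rightarrow> real" where
  "H0 n x y = (\<Sum>A | A \<subseteq> sedges n \<and> \<not> connected_in A (top_v n) (left_v n)
       \<and> \<not> connected_in A (top_v n) (right_v n) \<and> \<not> connected_in A (left_v n) (right_v n).
       tweight (sverts n) (sedges n) A x y)"

definition N :: "nat \<Rightarrow> real \<Rightarrow> real \<Rightarrow> real" where
  "N n x y = H1 n x y / (x - 1)"

definition M :: "nat \<Rightarrow> real \<Rightarrow> real \<Rightarrow> real" where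
  "M n x y = H0 n x y / (x - 1) ^ 2"

end

theory Submission
  imports Defs
begin


lemma adj_sym: "(u,v) \<in> adj A \<Longrightarrow> (v,u) \<in> adj A"
  by (simp add: adj_def insert_commute)

lemma sym_adj: "sym (adj A)"
  by (auto simp: sym_def adj_def insert_commute)

lemma conn_refl[simp]: "connected_in A u u"
  by (simp add: connected_in_def)

lemma conn_sym: "connected_in A u v \<Longrightarrow> connected_in A v u"
  using sym_rtrancl[OF sym_adj[of A]] unfolding connected_in_def sym_def by blast

lemma conn_trans: "connected_in A u v \<Longrightarrow> connected_in A v w \<Longrightarrow> connected_in A u w"
  unfolding connected_in_def by (rule rtrancl_trans)

lemma conn_edge: "{u,v} \<in> A \<Longrightarrow> connected_in A u v"
  unfolding connected_in_def adj_def by auto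

lemma conn_mono: "A \<subseteq> B \<Longrightarrow> connected_in A u v \<Longrightarrow> connected_in B u v"
proof -
  assume "A \<subseteq> B" "connected_in A u v"
  moreover have "adj A \<subseteq> adj B" using \<open>A \<subseteq> B\<close> by (auto simp: adj_def)
  ultimately show ?thesis unfolding connected_in_def using rtrancl_mono by blast
qed

lemma adj_insert: "adj (insert {u,v} A) = adj A \<union> {(u,v),(v,u)}"
  by (auto simp: adj_def doubleton_eq_iff)

lemma conn_insert:
  "connected_in (insert {u,v} A) x y \<longleftrightarrow> connected_in A x y \<or> (connected_in A x u \<and> connected_in A v y)
     \<or> (connected_in A x v \<and> connected_in A u y)" (is "?L \<longleftrightarrow> ?R")
proof
  assume "?L"
  then have "(x,y) \<in> (adj A \<union> {(u,v),(v,u)})\<^sup>*" by (simp add: connected_in_def adj_insert)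
  then show ?R
  proof (induction rule: rtrancl_induct)
    case base then show ?case by simp
  next
    case (step y z)
    from step.hyps(2) consider "(y,z) \<in> adj A" | "y = u" "z = v" | "y = v" "z = u" by blast
    then show ?case
    proof cases
      case 1
      then have "connected_in A y z" by (simp add: connected_in_def)
      then show ?thesis using step.IH conn_trans[OF _ \<open>connected_in A y z\<close>] by blast
    next
      case 2 then show ?thesis using step.IH by auto
    next
      case 3 then show ?thesis using step.IH by auto
    qed
  qed
next
  assume ?R
  have s: "A \<subseteq> insert {u,v} A" by blast
  have e: "connected_in (insert {u,v} A) u v" "connected_in (insert {u,v} A) v u"
    by (auto intro: conn_edge simp: insert_commute)
  note m = conn_mono[OF s]
  from \<open>?R\<close> show ?L
  proof (elim disjE conjE)
    assume "connected_in A x y" then show ?L by (rule m)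
  next
    assume "connected_in A x u" "connected_in A v y"
    then show ?L using m conn_trans e(1) by meson
  next
    assume "connected_in A x v" "connected_in A u y"
    then show ?L using m conn_trans e(2) by meson
  qed
qed

definition gcomp :: "'a set set \<Rightarrow> 'a set \<Rightarrow> 'a \<Rightarrow> 'a set" where
  "gcomp A V x = {w \<in> V. connected_in A x w}"

lemma ncomp_comp: "ncomp V A = card (gcomp A V ` V)"
  by (simp add: ncomp_def gcomp_def)

lemma gcomp_eq: "gcomp A V x = gcomp A V y \<longleftrightarrow> connected_in A x y" if "x \<in> V" "y \<in> V"
proof
  assume "gcomp A V x = gcomp A V y"
  moreover have "y \<in> gcomp A V y" using that by (simp add: gcomp_def)
  ultimately have "y \<in> gcomp A V x" by simp
  then show "connected_in A x y" by (simp add: gcomp_def)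
next
  assume xy: "connected_in A x y"
  have "connected_in A x w \<longleftrightarrow> connected_in A y w" for w
    using conn_trans[OF xy, of w] conn_trans[OF conn_sym[OF xy], of w] by blast
  then show "gcomp A V x = gcomp A V y" unfolding gcomp_def by simp
qed

lemma ncomp_le: "finite V \<Longrightarrow> ncomp V A \<le> card V"
  by (simp add: ncomp_comp card_image_le)

lemma ncomp_empty: "ncomp V {} = card V"
proof -
  have "(adj ({}::'a set set))\<^sup>* = Id" by (simp add: adj_def)
  then have "gcomp {} V x = (if x \<in> V then {x} else {})" for x
    by (auto simp: gcomp_def connected_in_def)
  then have "gcomp {} V ` V = (\<lambda>x. {x}) ` V" by auto
  then show ?thesis by (simp add: ncomp_comp card_image)
qed

lemma ncomp_insert_conn:
  assumes "connected_in A u v"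
  shows "ncomp V (insert {u,v} A) = ncomp V A"
proof -
  have "connected_in (insert {u,v} A) x y = connected_in A x y" for x y
  proof -
    have "connected_in A x u \<Longrightarrow> connected_in A v y \<Longrightarrow> connected_in A x y"
      using conn_trans[OF conn_trans[OF _ assms]] by blast
    moreover have "connected_in A x v \<Longrightarrow> connected_in A u y \<Longrightarrow> connected_in A x y"
      using conn_trans[OF conn_trans[OF _ conn_sym[OF assms]]] by blast
    ultimately show ?thesis using conn_insert[of u v A x y] by blast
  qed
  then have "connected_in (insert {u,v} A) = connected_in A" by (intro ext)
  then show ?thesis unfolding ncomp_def by (simp only:)
qed

lemma gcomp_insert:
  assumes "\<not> connected_in A u v"
  shows "gcomp (insert {u,v} A) V x = (if connected_in A x u \<or> connected_in A x v then gcomp A V u \<union> gcomp A V v else gcomp A V x)"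
proof (cases "connected_in A x u \<or> connected_in A x v")
  case True
  have "connected_in (insert {u,v} A) x w \<longleftrightarrow> connected_in A u w \<or> connected_in A v w" for w
  proof -
    have "connected_in A x w \<Longrightarrow> connected_in A u w \<or> connected_in A v w"
      using True conn_trans[OF conn_sym[of A x u], of w] conn_trans[OF conn_sym[of A x v], of w] by blast
    moreover have "connected_in A x u \<and> connected_in A v w \<Longrightarrow> connected_in A u w \<or> connected_in A v w" by blast
    moreover have "connected_in A x v \<and> connected_in A u w \<Longrightarrow> connected_in A u w \<or> connected_in A v w" by blast
    moreover have "connected_in A u w \<Longrightarrow> connected_in (insert {u,v} A) x w"
    proof -
      assume uw: "connected_in A u w"
      show ?thesis
      proof (cases "connected_in A x u")
        case True then show ?thesis using uw conn_trans conn_insert by metis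
      next
        case False then have "connected_in A x v" using \<open>connected_in A x u \<or> connected_in A x v\<close> by blast
        then show ?thesis using uw conn_insert by metis
      qed
    qed
    moreover have "connected_in A v w \<Longrightarrow> connected_in (insert {u,v} A) x w"
    proof -
      assume vw: "connected_in A v w"
      show ?thesis
      proof (cases "connected_in A x v")
        case True then show ?thesis using vw conn_trans conn_insert by metis
      next
        case False then have "connected_in A x u" using \<open>connected_in A x u \<or> connected_in A x v\<close> by blast
        then show ?thesis using vw conn_insert by metis
      qed
    qed
    ultimately show ?thesis using conn_insert[of u v A x w] by blast
  qed
  then show ?thesis using True unfolding gcomp_def by auto
next
  case False
  have "connected_in (insert {u,v} A) x w \<longleftrightarrow> connected_in A x w" for w
    using False conn_insert[of u v A x w] by blast
  then show ?thesis using False unfolding gcomp_def by auto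
qed

lemma ncomp_insert_nconn:
  assumes V: "finite V" "u \<in> V" "v \<in> V" and nc: "\<not> connected_in A u v"
  shows "ncomp V (insert {u,v} A) + 1 = ncomp V A"
proof -
  let ?C = "gcomp A V" and ?C' = "gcomp (insert {u,v} A) V"
  have C': "?C' x = (if connected_in A x u \<or> connected_in A x v then ?C u \<union> ?C v else ?C x)" for x
    by (rule gcomp_insert[OF nc])
  have uv: "?C u \<noteq> ?C v" using gcomp_eq[of u V v A] V nc by auto
  have im: "?C' ` V = insert (?C u \<union> ?C v) (?C ` V - {?C u, ?C v})"
  proof
    show "?C' ` V \<subseteq> insert (?C u \<union> ?C v) (?C ` V - {?C u, ?C v})"
    proof
      fix X assume "X \<in> ?C' ` V"
      then obtain x where x: "x \<in> V" "X = ?C' x" by blast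
      show "X \<in> insert (?C u \<union> ?C v) (?C ` V - {?C u, ?C v})"
      proof (cases "connected_in A x u \<or> connected_in A x v")
        case True then show ?thesis using x C' by simp
      next
        case False
        then have "?C x \<noteq> ?C u" "?C x \<noteq> ?C v" using gcomp_eq x V by metis+
        then show ?thesis using x C' False by auto
      qed
    qed
  next
    show "insert (?C u \<union> ?C v) (?C ` V - {?C u, ?C v}) \<subseteq> ?C' ` V"
    proof
      fix X assume X: "X \<in> insert (?C u \<union> ?C v) (?C ` V - {?C u, ?C v})"
      show "X \<in> ?C' ` V"
      proof (cases "X = ?C u \<union> ?C v")
        case True then show ?thesis using C'[of u] V by (auto intro!: image_eqI[where x=u])
      next
        case False
        then obtain x where x: "x \<in> V" "X = ?C x" "?C x \<noteq> ?C u" "?C x \<noteq> ?C v" using X by auto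
        then have "\<not> connected_in A x u" "\<not> connected_in A x v" using gcomp_eq V by metis+
        then show ?thesis using x C' by (auto intro!: image_eqI[where x=x])
      qed
    qed
  qed
  have notin: "?C u \<union> ?C v \<notin> ?C ` V - {?C u, ?C v}"
  proof
    assume "?C u \<union> ?C v \<in> ?C ` V - {?C u, ?C v}"
    then obtain x where x: "x \<in> V" "?C u \<union> ?C v = ?C x" "?C x \<noteq> ?C u" by auto
    have "u \<in> ?C u" using V by (simp add: gcomp_def)
    then have "u \<in> ?C x" using x by auto
    then have "connected_in A x u" by (simp add: gcomp_def)
    then have "?C x = ?C u" using gcomp_eq x V by metis
    then show False using x by simp
  qed
  have fin: "finite (?C ` V)" using V by simp
  have mem: "?C u \<in> ?C ` V" "?C v \<in> ?C ` V" using V by auto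
  have "card (?C' ` V) = card (?C ` V - {?C u, ?C v}) + 1"
    using im notin fin by simp
  also have "card (?C ` V - {?C u, ?C v}) = card (?C ` V) - 2"
    using mem uv fin by (simp add: card_Diff_subset)
  finally have "card (?C' ` V) = card (?C ` V) - 2 + 1" .
  moreover have "card {?C u, ?C v} \<le> card (?C ` V)" using mem fin by (intro card_mono) auto
  ultimately show ?thesis using uv by (simp add: ncomp_comp)
qed


definition nu :: "'a set \<Rightarrow> 'a set set \<Rightarrow> int" where
  "nu V A = int (card A) + int (ncomp V A) - int (card V)"

definition edges_in :: "'a set \<Rightarrow> 'a set set \<Rightarrow> bool" where
  "edges_in V A \<longleftrightarrow> (\<forall>e\<in>A. \<exists>u v. e = {u,v} \<and> u \<noteq> v \<and> u \<in> V \<and> v \<in> V)"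

lemma nu_empty: "nu V {} = 0"
  by (simp add: nu_def ncomp_empty)

lemma nu_insert:
  assumes "finite V" "finite A" "u \<in> V" "v \<in> V" "{u,v} \<notin> A"
  shows "nu V (insert {u,v} A) = nu V A + (if connected_in A u v then 1 else 0)"
proof (cases "connected_in A u v")
  case True then show ?thesis using assms ncomp_insert_conn[OF True] by (simp add: nu_def)
next
  case False then show ?thesis using assms ncomp_insert_nconn[of V u v A] by (simp add: nu_def)
qed

lemma nu_mono_insert:
  assumes "finite V" "finite A" "u \<in> V" "v \<in> V" "{u,v} \<notin> A"
  shows "nu V A \<le> nu V (insert {u,v} A)"
  using nu_insert[OF assms] by simp

lemma nu_nonneg:
  assumes "finite V" "finite A" "edges_in V A"
  shows "0 \<le> nu V A"
  using assms(2,3)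
proof (induction A rule: finite_induct)
  case empty then show ?case by (simp add: nu_empty)
next
  case (insert e A)
  then obtain u v where e: "e = {u,v}" "u \<in> V" "v \<in> V" by (auto simp: edges_in_def)
  have "edges_in V A" using insert.prems by (simp add: edges_in_def)
  then have "0 \<le> nu V A" using insert.IH by simp
  then show ?case using nu_mono_insert[OF assms(1) insert.hyps(1) e(2,3)] insert.hyps(2) e(1) by simp
qed

lemma gnullity_nu: "finite V \<Longrightarrow> gnullity V A = nat (nu V A)"
  using ncomp_le[of V A] by (simp add: gnullity_def grank_def nu_def)

lemma tweight_21:
  assumes "finite V" "finite A" "edges_in V A"
  shows "tweight V E A 2 1 = (if nu V A = 0 then 1 else 0)"
  using nu_nonneg[OF assms] gnullity_nu[OF assms(1), of A] by (simp add: tweight_def)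

subsection \<open>Paths and cycles\<close>

definition is_path :: "'a set set \<Rightarrow> 'a list \<Rightarrow> bool" where
  "is_path A ps \<longleftrightarrow> distinct ps \<and> (\<forall>i. Suc i < length ps \<longrightarrow> {ps ! i, ps ! Suc i} \<in> A)"

lemma conn_path:
  assumes "connected_in A x y"
  shows "\<exists>ps. ps \<noteq> [] \<and> hd ps = x \<and> last ps = y \<and> is_path A ps"
proof -
  have "(x,y) \<in> (adj A)\<^sup>*" using assms by (simp add: connected_in_def)
  then show ?thesis
  proof (induction rule: rtrancl_induct)
    case base then show ?case by (intro exI[of _ "[x]"]) (simp add: is_path_def)
  next
    case (step y z)
    then obtain ps where ps: "ps \<noteq> []" "hd ps = x" "last ps = y" "is_path A ps" by blast
    have yz: "{y,z} \<in> A" using step.hyps(2) by (simp add: adj_def)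
    show ?case
    proof (cases "z \<in> set ps")
      case True
      then obtain k where k: "k < length ps" "ps ! k = z" by (auto simp: in_set_conv_nth)
      let ?qs = "take (Suc k) ps"
      have "?qs \<noteq> []" using ps(1) by simp
      moreover have "hd ?qs = x" using ps(1,2) by simp
      moreover have "last ?qs = z" using k by (simp add: take_Suc_conv_app_nth)
      moreover have "is_path A ?qs" using ps(4) k unfolding is_path_def by auto
      ultimately show ?thesis by blast
    next
      case False
      let ?qs = "ps @ [z]"
      have "hd ?qs = x" using ps by simp
      moreover have "is_path A ?qs"
        unfolding is_path_def
      proof (intro conjI allI impI)
        show "distinct ?qs" using ps(4) False by (simp add: is_path_def)
      next
        fix i assume i: "Suc i < length ?qs"
        show "{?qs ! i, ?qs ! Suc i} \<in> A"
        proof (cases "Suc i < length ps")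
          case True then show ?thesis using ps(4) by (simp add: is_path_def nth_append)
        next
          case False
          then have "i = length ps - 1" "Suc i = length ps" using i by auto
          then show ?thesis using ps(1,3) yz by (simp add: nth_append last_conv_nth)
        qed
      qed
      ultimately show ?thesis by auto
    qed
  qed
qed

lemma conn_to_cyc:
  assumes "connected_in A u v" "u \<noteq> v" "{u,v} \<notin> A"
  shows "has_cycle (insert {u,v} A)"
proof -
  obtain ps where ps: "ps \<noteq> []" "hd ps = u" "last ps = v" "is_path A ps"
    using conn_path[OF assms(1)] by blast
  have l1: "length ps \<noteq> 1"
  proof
    assume "length ps = 1"
    then obtain a where "ps = [a]" by (cases ps) auto
    then show False using ps assms(2) by simp
  qed
  have l2: "length ps \<noteq> 2"
  proof
    assume "length ps = 2"
    then obtain a b where ab: "ps = [a,b]" by (cases ps; cases "tl ps") auto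
    then have "{ps ! 0, ps ! Suc 0} \<in> A" using ps(4) by (simp add: is_path_def)
    then show False using ab ps assms(3) by simp
  qed
  have L: "3 \<le> length ps" using l1 l2 ps(1) by (cases "length ps") auto
  show ?thesis unfolding has_cycle_def
  proof (intro exI[of _ ps] conjI allI impI)
    show "3 \<le> length ps" by (rule L)
    show "distinct ps" using ps(4) by (simp add: is_path_def)
  next
    fix i assume i: "i < length ps"
    show "{ps ! i, ps ! ((i + 1) mod length ps)} \<in> insert {u, v} A"
    proof (cases "Suc i < length ps")
      case True then show ?thesis using ps(4) by (simp add: is_path_def)
    next
      case False
      then have "i = length ps - 1" using i by auto
      moreover have "ps ! (length ps - 1) = v" using ps(1,3) by (simp add: last_conv_nth)
      moreover have "ps ! 0 = u" using ps(1,2) by (simp add: hd_conv_nth)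
      ultimately show ?thesis using ps(1) L by (simp add: insert_commute)
    qed
  qed
qed

lemma cyc_to_conn:
  assumes "has_cycle (insert {u,v} A)" "\<not> has_cycle A"
  shows "connected_in A u v"
proof -
  obtain vs where vs: "3 \<le> length vs" "distinct vs"
    "\<And>i. i < length vs \<Longrightarrow> {vs ! i, vs ! ((i + 1) mod length vs)} \<in> insert {u,v} A"
    using assms(1) unfolding has_cycle_def by blast
  define L where "L = length vs"
  define ed where "ed i = {vs ! i, vs ! ((i + 1) mod L)}" for i
  obtain i where i: "i < L" "ed i \<notin> A"
    using assms(2) vs unfolding has_cycle_def ed_def L_def by blast
  have edi: "ed i = {u,v}" using vs(3)[of i] i unfolding ed_def L_def by auto
  have uniq: "j = i" if "j < L" "ed j = ed i" for j
  proof -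
    have d: "vs ! a = vs ! b \<longleftrightarrow> a = b" if "a < L" "b < L" for a b
      using vs(2) that nth_eq_iff_index_eq unfolding L_def by blast
    have m: "(k + 1) mod L < L" for k using vs(1) unfolding L_def by (intro mod_less_divisor) linarith
    from that(2) consider "vs ! j = vs ! i" | "vs ! j = vs ! ((i+1) mod L)" "vs ! ((j+1) mod L) = vs ! i"
      unfolding ed_def by (auto simp: doubleton_eq_iff)
    then show ?thesis
    proof cases
      case 1 then show ?thesis using d that i by blast
    next
      case 2
      then have "j = (i+1) mod L" "(j+1) mod L = i" using d[OF that(1) m] d[OF m i(1)] by auto
      then have "((i+1) mod L + 1) mod L = i" by simp
      then have "(i + 2) mod L = i" by (simp add: mod_Suc_eq)
      moreover have "3 \<le> L" using vs(1) L_def by simp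
      ultimately have False
      proof (cases "i + 2 < L")
        case True then show False using \<open>(i+2) mod L = i\<close> by simp
      next
        case False
        then have "(i+2) mod L = (i + 2 - L) mod L" by (simp add: le_mod_geq)
        also have "\<dots> = i + 2 - L" using i(1) \<open>3 \<le> L\<close> by (intro mod_less) linarith
        finally show False using \<open>(i+2) mod L = i\<close> \<open>3 \<le> L\<close> False by linarith
      qed
      then show ?thesis ..
    qed
  qed
  have other: "ed j \<in> A" if "j < L" "j \<noteq> i" for j
  proof -
    have "ed j \<in> insert {u,v} A" using vs(3) that unfolding ed_def L_def by simp
    moreover have "ed j \<noteq> {u,v}" using uniq[OF that(1)] edi that(2) by auto
    ultimately show ?thesis by simp
  qed
  have walk: "connected_in A (vs ! ((i+1) mod L)) (vs ! ((i+1+k) mod L))" if "k \<le> L - 1" for k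
    using that
  proof (induction k)
    case 0 then show ?case by simp
  next
    case (Suc k)
    let ?j = "(i+1+k) mod L"
    have jL: "?j < L" using vs(1) L_def by (intro mod_less_divisor) linarith
    have "?j \<noteq> i"
    proof
      assume "?j = i"
      have kL: "k+1 < L" using Suc.prems vs(1) L_def by auto
      show False
      proof (cases "i+1+k < L")
        case True then show False using \<open>?j = i\<close> by simp
      next
        case False
        then have "?j = (i+1+k - L) mod L" by (simp add: le_mod_geq)
        also have "\<dots> = i+1+k - L" using i(1) kL by (intro mod_less) linarith
        finally show False using \<open>?j = i\<close> kL \<open>\<not> i+1+k < L\<close> by linarith
      qed
    qed
    then have "ed ?j \<in> A" using other jL by blast
    then have "connected_in A (vs ! ?j) (vs ! ((?j + 1) mod L))" unfolding ed_def by (rule conn_edge)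
    moreover have "(?j + 1) mod L = (i + 1 + Suc k) mod L" by (simp add: mod_Suc_eq)
    ultimately show ?case using Suc conn_trans by fastforce
  qed
  have "i+1+(L-1) = i + L" using vs(1) L_def by simp
  then have "(i+1+(L-1)) mod L = i" using i by simp
  then have c: "connected_in A (vs ! ((i+1) mod L)) (vs ! i)" using walk[of "L-1"] by simp
  from edi have "(vs ! i = u \<and> vs ! ((i+1) mod L) = v) \<or> (vs ! i = v \<and> vs ! ((i+1) mod L) = u)"
    unfolding ed_def doubleton_eq_iff by blast
  then show ?thesis
  proof
    assume "vs ! i = u \<and> vs ! ((i+1) mod L) = v"
    then show ?thesis using conn_sym[OF c] by simp
  next
    assume "vs ! i = v \<and> vs ! ((i+1) mod L) = u"
    then show ?thesis using c by simp
  qed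
qed

lemma has_cycle_mono: "has_cycle A \<Longrightarrow> A \<subseteq> B \<Longrightarrow> has_cycle B"
  unfolding has_cycle_def by blast

lemma has_cycle_nu:
  assumes "finite V" "finite A" "edges_in V A"
  shows "has_cycle A \<longleftrightarrow> 0 < nu V A"
  using assms(2,3)
proof (induction A rule: finite_induct)
  case empty then show ?case by (auto simp: nu_empty has_cycle_def intro: exI[of _ 0])
next
  case (insert e A)
  then obtain u v where e: "e = {u,v}" "u \<noteq> v" "u \<in> V" "v \<in> V" by (auto simp: edges_in_def)
  have eA: "edges_in V A" using insert.prems by (simp add: edges_in_def)
  have nuins: "nu V (insert e A) = nu V A + (if connected_in A u v then 1 else 0)"
    using nu_insert[OF assms(1) insert.hyps(1) e(3,4)] insert.hyps(2) e(1) by simp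
  have nn: "0 \<le> nu V A" using nu_nonneg[OF assms(1) insert.hyps(1) eA] .
  show ?case
  proof (cases "has_cycle A")
    case True
    then show ?thesis using insert.IH[OF eA] nuins has_cycle_mono[of A "insert e A"] by auto
  next
    case False
    then have "nu V A = 0" using insert.IH[OF eA] nn by simp
    moreover have "has_cycle (insert e A) \<longleftrightarrow> connected_in A u v"
      using conn_to_cyc[of A u v] cyc_to_conn[of u v A] False e insert.hyps(2) by auto
    ultimately show ?thesis using nuins by simp
  qed
qed


lemma inj_img: "inj f \<Longrightarrow> inj (\<lambda>C. f ` C)"
  unfolding inj_def using inj_image_eq_iff by blast

lemma inj_Cons': "inj (Cons i)" by (simp add: inj_def)

definition imgE :: "('a \<Rightarrow> 'b) \<Rightarrow> 'a set set \<Rightarrow> 'b set set" where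
  "imgE f A = (\<lambda>e. f ` e) ` A"

lemma finite_imgE: "finite A \<Longrightarrow> finite (imgE f A)" by (simp add: imgE_def)

lemma adj_imgE:
  assumes "inj f" shows "adj (imgE f A) = map_prod f f ` adj A"
proof
  show "adj (imgE f A) \<subseteq> map_prod f f ` adj A"
  proof
    fix p assume "p \<in> adj (imgE f A)"
    then obtain x y e where p: "p = (x,y)" "e \<in> A" "{x,y} = f ` e" by (auto simp: adj_def imgE_def)
    then obtain a b where ab: "a \<in> e" "b \<in> e" "x = f a" "y = f b" by (metis imageE insertI1 insertI2)
    then have "f ` e = f ` {a,b}" using p by simp
    then have "e = {a,b}" using assms by (metis image_empty image_insert inj_image_eq_iff)
    then show "p \<in> map_prod f f ` adj A" using p ab by (auto simp: adj_def)
  qed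
next
  show "map_prod f f ` adj A \<subseteq> adj (imgE f A)"
  proof
    fix p assume "p \<in> map_prod f f ` adj A"
    then obtain x y where "p = (f x, f y)" "{x,y} \<in> A" by (auto simp: adj_def)
    moreover then have "{f x, f y} = (\<lambda>e. f ` e) {x,y}" by simp
    ultimately show "p \<in> adj (imgE f A)" unfolding adj_def imgE_def by (metis (mono_tags) case_prod_conv image_eqI mem_Collect_eq)
  qed
qed

lemma rtrancl_map_inj:
  assumes "inj f" "(f x, w) \<in> (map_prod f f ` R)\<^sup>*"
  shows "\<exists>y. w = f y \<and> (x,y) \<in> R\<^sup>*"
  using assms(2)
proof (induction rule: rtrancl_induct)
  case base then show ?case by blast
next
  case (step b c)
  then obtain y where y: "b = f y" "(x,y) \<in> R\<^sup>*" by blast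
  from step.hyps(2) obtain p q where pq: "(p,q) \<in> R" "b = f p" "c = f q" by auto
  then have "p = y" using y assms(1) by (simp add: inj_eq)
  then have "(x,q) \<in> R\<^sup>*" using pq y by (meson rtrancl.rtrancl_into_rtrancl)
  then show ?case using pq by blast
qed

lemma rtrancl_map_mono:
  "(x,y) \<in> R\<^sup>* \<Longrightarrow> (f x, f y) \<in> (map_prod f f ` R)\<^sup>*"
proof (induction rule: rtrancl_induct)
  case base then show ?case by simp
next
  case (step b c)
  then have "(f b, f c) \<in> map_prod f f ` R" by force
  then show ?case using step.IH by (meson rtrancl.rtrancl_into_rtrancl)
qed

lemma conn_imgE_range:
  assumes "inj f" "connected_in (imgE f A) (f x) w"
  shows "\<exists>y. w = f y \<and> connected_in A x y"
  using rtrancl_map_inj[OF assms(1), of x w "adj A"] assms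
  by (simp add: connected_in_def adj_imgE)

lemma conn_imgE_iff:
  assumes "inj f" shows "connected_in (imgE f A) (f x) (f y) \<longleftrightarrow> connected_in A x y"
proof
  assume "connected_in (imgE f A) (f x) (f y)"
  then obtain z where "f y = f z" "connected_in A x z" using conn_imgE_range[OF assms] by blast
  then show "connected_in A x y" using assms by (simp add: inj_eq)
next
  assume "connected_in A x y"
  then show "connected_in (imgE f A) (f x) (f y)"
    using rtrancl_map_mono[of x y "adj A" f] by (simp add: connected_in_def adj_imgE[OF assms])
qed

lemma gcomp_imgE:
  assumes "inj f" shows "gcomp (imgE f A) (f ` V) (f x) = f ` gcomp A V x"
proof
  show "gcomp (imgE f A) (f ` V) (f x) \<subseteq> f ` gcomp A V x"
    unfolding gcomp_def using conn_imgE_iff[OF assms] by auto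
  show "f ` gcomp A V x \<subseteq> gcomp (imgE f A) (f ` V) (f x)"
    unfolding gcomp_def using conn_imgE_iff[OF assms] by auto
qed

lemma ncomp_imgE:
  assumes "inj f" shows "ncomp (f ` V) (imgE f A) = ncomp V A"
proof -
  have "gcomp (imgE f A) (f ` V) ` (f ` V) = (\<lambda>C. f ` C) ` (gcomp A V ` V)"
    unfolding image_image by (simp add: gcomp_imgE[OF assms])
  moreover have "inj (\<lambda>C. f ` C)" using assms by (rule inj_img)
  ultimately show ?thesis unfolding ncomp_comp by (metis card_image inj_on_subset subset_UNIV)
qed

lemma card_imgE: assumes "inj f" shows "card (imgE f A) = card A"
  unfolding imgE_def by (rule card_image, rule inj_on_subset[OF inj_img[OF assms]], simp)

lemma nu_imgE: "inj f \<Longrightarrow> nu (f ` V) (imgE f A) = nu V A"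
proof -
  assume f: "inj f"
  then have "card (f ` V) = card V" by (rule card_image[OF inj_on_subset]) simp
  then show ?thesis using f by (simp add: nu_def ncomp_imgE card_imgE)
qed

lemma edges_in_imgE: "edges_in V A \<Longrightarrow> inj f \<Longrightarrow> edges_in (f ` V) (imgE f A)"
  unfolding edges_in_def imgE_def by (fastforce simp: inj_eq)

subsection \<open>Disjoint union of copies indexed by a letter\<close>

definition UE :: "nat set \<Rightarrow> (nat \<Rightarrow> nat list set set) \<Rightarrow> nat list set set" where
  "UE I B = (\<Union>i\<in>I. imgE (Cons i) (B i))"

definition UV :: "nat set \<Rightarrow> nat list set \<Rightarrow> nat list set" where
  "UV I V = (\<Union>i\<in>I. Cons i ` V)"

lemma adj_UE: "adj (UE I B) = (\<Union>i\<in>I. map_prod (Cons i) (Cons i) ` adj (B i))"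
proof -
  have "adj (UE I B) = (\<Union>i\<in>I. adj (imgE (Cons i) (B i)))" by (auto simp: adj_def UE_def)
  then show ?thesis by (simp add: adj_imgE)
qed

lemma conn_UE_range:
  assumes "connected_in (UE I B) (i # x) w"
  shows "\<exists>y. w = i # y \<and> connected_in (B i) x y"
proof -
  have "(i # x, w) \<in> (\<Union>i\<in>I. map_prod (Cons i) (Cons i) ` adj (B i))\<^sup>*"
    using assms by (simp add: connected_in_def adj_UE)
  then show ?thesis
  proof (induction rule: rtrancl_induct)
    case base then show ?case by auto
  next
    case (step b c)
    then obtain y where y: "b = i # y" "connected_in (B i) x y" by blast
    from step.hyps(2) obtain j p q where "j \<in> I" "(p,q) \<in> adj (B j)" "b = j # p" "c = j # q" by auto
    then have "j = i" "p = y" "(y,q) \<in> adj (B i)" using y by auto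
    then have "connected_in (B i) x q" using y(2) unfolding connected_in_def
      by (meson rtrancl.rtrancl_into_rtrancl)
    then show ?case using \<open>c = j # q\<close> \<open>j = i\<close> by blast
  qed
qed

lemma conn_UE_iff:
  assumes "i \<in> I"
  shows "connected_in (UE I B) (i # x) (j # y) \<longleftrightarrow> i = j \<and> connected_in (B i) x y"
proof
  assume "connected_in (UE I B) (i # x) (j # y)"
  then show "i = j \<and> connected_in (B i) x y" using conn_UE_range by fastforce
next
  assume a: "i = j \<and> connected_in (B i) x y"
  have "imgE (Cons i) (B i) \<subseteq> UE I B" using assms by (auto simp: UE_def)
  moreover have "connected_in (imgE (Cons i) (B i)) (i # x) (i # y)"
  proof -
    have "connected_in (B i) x y" using a by blast
    then show ?thesis using conn_imgE_iff[OF inj_Cons', of i "B i" x y] by simp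
  qed
  ultimately have "connected_in (UE I B) (i # x) (i # y)" by (rule conn_mono)
  then show "connected_in (UE I B) (i # x) (j # y)" using a by simp
qed

lemma gcomp_UE:
  assumes "i \<in> I" "x \<in> V"
  shows "gcomp (UE I B) (UV I V) (i # x) = Cons i ` gcomp (B i) V x"
proof
  show "gcomp (UE I B) (UV I V) (i # x) \<subseteq> Cons i ` gcomp (B i) V x"
  proof
    fix w assume "w \<in> gcomp (UE I B) (UV I V) (i # x)"
    then have w: "w \<in> UV I V" "connected_in (UE I B) (i # x) w" by (auto simp: gcomp_def)
    then obtain y where "w = i # y" "connected_in (B i) x y" using conn_UE_range by blast
    moreover then have "y \<in> V" using w(1) by (auto simp: UV_def)
    ultimately show "w \<in> Cons i ` gcomp (B i) V x" by (auto simp: gcomp_def)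
  qed
next
  show "Cons i ` gcomp (B i) V x \<subseteq> gcomp (UE I B) (UV I V) (i # x)"
    using assms conn_UE_iff[OF assms(1)] by (auto simp: gcomp_def UV_def)
qed

lemma ncomp_UE:
  assumes "finite I" "finite V"
  shows "ncomp (UV I V) (UE I B) = (\<Sum>i\<in>I. ncomp V (B i))"
proof -
  have eq: "gcomp (UE I B) (UV I V) ` UV I V = (\<Union>i\<in>I. (\<lambda>C. Cons i ` C) ` (gcomp (B i) V ` V))"
  proof -
    have "gcomp (UE I B) (UV I V) ` UV I V = (\<Union>i\<in>I. gcomp (UE I B) (UV I V) ` Cons i ` V)"
      by (auto simp: UV_def)
    also have "\<dots> = (\<Union>i\<in>I. (\<lambda>C. Cons i ` C) ` (gcomp (B i) V ` V))"
      using gcomp_UE by (intro SUP_cong refl) (auto simp: image_image)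
    finally show ?thesis .
  qed
  have disj: "((\<lambda>C. Cons i ` C) ` (gcomp (B i) V ` V)) \<inter> ((\<lambda>C. Cons j ` C) ` (gcomp (B j) V ` V)) = {}"
    if "i \<noteq> j" for i j
  proof (rule ccontr)
    assume "((\<lambda>C. Cons i ` C) ` (gcomp (B i) V ` V)) \<inter> ((\<lambda>C. Cons j ` C) ` (gcomp (B j) V ` V)) \<noteq> {}"
    then obtain x y where x: "x\<in>V" "y\<in>V" "Cons i ` gcomp (B i) V x = Cons j ` gcomp (B j) V y" by blast
    have "i # x \<in> Cons i ` gcomp (B i) V x" using x(1) by (simp add: gcomp_def)
    then have "i # x \<in> Cons j ` gcomp (B j) V y" using x(3) by simp
    then show False using that by auto
  qed
  have card_i: "card ((\<lambda>C. Cons i ` C) ` (gcomp (B i) V ` V)) = ncomp V (B i)" for i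
    unfolding ncomp_comp by (rule card_image, rule inj_on_subset[OF inj_img[OF inj_Cons']], simp)
  have "card (\<Union>i\<in>I. (\<lambda>C. Cons i ` C) ` (gcomp (B i) V ` V)) = (\<Sum>i\<in>I. card ((\<lambda>C. Cons i ` C) ` (gcomp (B i) V ` V)))"
    by (intro card_UN_disjoint ballI impI) (simp_all add: assms disj)
  then show ?thesis unfolding ncomp_comp eq by (simp add: card_i[unfolded ncomp_comp])
qed

lemma card_UV: "finite I \<Longrightarrow> finite V \<Longrightarrow> card (UV I V) = card I * card V"
proof -
  assume a: "finite I" "finite V"
  have "card (\<Union>i\<in>I. Cons i ` V) = (\<Sum>i\<in>I. card (Cons i ` V))"
    by (intro card_UN_disjoint ballI impI) (auto simp: a)
  also have "\<dots> = (\<Sum>i\<in>I. card V)" by (intro sum.cong refl card_image) (simp add: inj_on_def)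
  finally show ?thesis by (simp add: UV_def)
qed

lemma card_UE:
  assumes "finite I" "\<And>i. i \<in> I \<Longrightarrow> finite (B i)" "\<And>i. i \<in> I \<Longrightarrow> {} \<notin> B i"
  shows "card (UE I B) = (\<Sum>i\<in>I. card (B i))"
proof -
  have d: "imgE (Cons i) (B i) \<inter> imgE (Cons j) (B j) = {}" if ij: "i \<noteq> j" "i \<in> I" for i j
  proof (rule ccontr)
    assume "imgE (Cons i) (B i) \<inter> imgE (Cons j) (B j) \<noteq> {}"
    then obtain e e' where e: "e \<in> B i" "e' \<in> B j" "Cons i ` e = Cons j ` e'" by (auto simp: imgE_def)
    then obtain x where "x \<in> e" using assms(3)[OF ij(2)] e(1) by (metis all_not_in_conv)
    then have "i # x \<in> Cons j ` e'" using e(3) by blast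
    then show False using ij by auto
  qed
  have "card (\<Union>i\<in>I. imgE (Cons i) (B i)) = (\<Sum>i\<in>I. card (imgE (Cons i) (B i)))"
    by (intro card_UN_disjoint ballI impI) (auto simp: assms d finite_imgE)
  also have "\<dots> = (\<Sum>i\<in>I. card (B i))" by (intro sum.cong refl card_imgE inj_Cons')
  finally show ?thesis by (simp add: UE_def)
qed

lemma nu_UE:
  assumes "finite I" "finite V" "\<And>i. i \<in> I \<Longrightarrow> finite (B i)" "\<And>i. i \<in> I \<Longrightarrow> {} \<notin> B i"
  shows "nu (UV I V) (UE I B) = (\<Sum>i\<in>I. nu V (B i))"
  using assms by (simp add: nu_def ncomp_UE card_UV card_UE sum.distrib sum_subtractf)


definition bb :: "nat \<Rightarrow> nat \<Rightarrow> nat \<Rightarrow> nat list set" where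
  "bb n i j = {i # replicate n j, j # replicate n i}"

lemma sverts_Suc: "sverts (Suc n) = UV {0,1,2} (sverts n)"
  by (simp add: UV_def)

lemma sedges_Suc: "sedges (Suc n) = UE {0,1,2} (\<lambda>_. sedges n) \<union> {bb n 0 1, bb n 0 2, bb n 1 2}"
proof (cases n)
  case 0 then show ?thesis by (simp add: UE_def bb_def imgE_def insert_commute)
next
  case (Suc m) then show ?thesis
    by (simp add: UE_def bb_def imgE_def top_v_def left_v_def right_v_def)
qed

lemma finite_sverts: "finite (sverts n)"
  by (induction n) auto

lemma rep_sverts: "p \<in> {0,1,2} \<Longrightarrow> replicate n p \<in> sverts n"
  by (induction n) auto

lemma finite_UE: "finite I \<Longrightarrow> (\<And>i. i \<in> I \<Longrightarrow> finite (B i)) \<Longrightarrow> finite (UE I B)"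
  by (simp add: UE_def finite_imgE)

lemma finite_sedges: "finite (sedges n)"
proof (induction n)
  case 0 then show ?case by simp
next
  case (Suc n) then show ?case by (simp add: sedges_Suc finite_UE)
qed

lemma edges_in_UE:
  assumes "\<And>i. i \<in> I \<Longrightarrow> edges_in V (B i)"
  shows "edges_in (UV I V) (UE I B)"
  unfolding edges_in_def
proof
  fix e assume "e \<in> UE I B"
  then obtain i e0 where e: "i \<in> I" "e0 \<in> B i" "e = Cons i ` e0" by (auto simp: UE_def imgE_def)
  then obtain u v where "e0 = {u,v}" "u \<noteq> v" "u \<in> V" "v \<in> V" using assms unfolding edges_in_def by blast
  then show "\<exists>u v. e = {u, v} \<and> u \<noteq> v \<and> u \<in> UV I V \<and> v \<in> UV I V"
    using e by (intro exI[of _ "i # u"] exI[of _ "i # v"]) (auto simp: UV_def)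
qed

lemma edges_in_Un: "edges_in V A \<Longrightarrow> edges_in V B \<Longrightarrow> edges_in V (A \<union> B)"
  by (auto simp: edges_in_def)

lemma edges_in_sedges: "edges_in (sverts n) (sedges n)"
proof (induction n)
  case 0 then show ?case by (simp add: edges_in_def)
next
  case (Suc n)
  have r: "replicate n 0 \<in> sverts n" "replicate n 1 \<in> sverts n" "replicate n 2 \<in> sverts n"
    using rep_sverts by auto
  have bi: "\<exists>u v. bb n i j = {u,v} \<and> u \<noteq> v \<and> u \<in> sverts (Suc n) \<and> v \<in> sverts (Suc n)"
    if "i \<in> {0,1,2}" "j \<in> {0,1,2}" "i \<noteq> j" for i j
    by (rule exI[of _ "i # replicate n j"], rule exI[of _ "j # replicate n i"]) (use that r in \<open>auto simp: bb_def\<close>)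
  have b: "edges_in (sverts (Suc n)) {bb n 0 1, bb n 0 2, bb n 1 2}"
    unfolding edges_in_def using bi[of 0 1] bi[of 0 2] bi[of 1 2] by auto
  show ?case unfolding sedges_Suc
    by (rule edges_in_Un[OF _ b]) (unfold sverts_Suc, rule edges_in_UE, rule Suc)
qed

lemma edges_in_subset: "edges_in V A \<Longrightarrow> B \<subseteq> A \<Longrightarrow> edges_in V B"
  by (auto simp: edges_in_def)

lemma edges_in_nonempty: "edges_in V A \<Longrightarrow> {} \<notin> A"
  by (auto simp: edges_in_def)

subsection \<open>Port relations\<close>

type_synonym tri = "bool \<times> bool \<times> bool"

definition tri :: "nat \<Rightarrow> nat list set set \<Rightarrow> tri" where
  "tri n A = (connected_in A (replicate n 0) (replicate n 1), connected_in A (replicate n 0) (replicate n 2),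
              connected_in A (replicate n 1) (replicate n 2))"

definition rel :: "tri \<Rightarrow> nat \<Rightarrow> nat \<Rightarrow> bool" where
  "rel t p q = (case t of (a,b,c) \<Rightarrow> p = q \<or> ((p = 0 \<and> q = 1 \<or> p = 1 \<and> q = 0) \<and> a)
      \<or> ((p = 0 \<and> q = 2 \<or> p = 2 \<and> q = 0) \<and> b) \<or> ((p = 1 \<and> q = 2 \<or> p = 2 \<and> q = 1) \<and> c))"

lemma conn_rel:
  assumes "p \<in> {0,1,2}" "q \<in> {0,1,2}"
  shows "connected_in A (replicate n p) (replicate n q) = rel (tri n A) p q"
  using assms by (auto simp: rel_def tri_def intro: conn_sym)

definition pv :: "nat \<Rightarrow> nat \<times> nat \<Rightarrow> nat list" where
  "pv n x = fst x # replicate n (snd x)"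

definition ports :: "(nat \<times> nat) set" where "ports = {0,1,2} \<times> {0,1,2}"

definition Inv :: "nat \<Rightarrow> nat list set set \<Rightarrow> (nat \<times> nat \<Rightarrow> nat \<times> nat \<Rightarrow> bool) \<Rightarrow> bool" where
  "Inv n X R \<longleftrightarrow> (\<forall>x\<in>ports. \<forall>y\<in>ports. connected_in X (pv n x) (pv n y) = R x y)"

definition R0 :: "(nat \<Rightarrow> tri) \<Rightarrow> nat \<times> nat \<Rightarrow> nat \<times> nat \<Rightarrow> bool" where
  "R0 T x y = (fst x = fst y \<and> rel (T (fst x)) (snd x) (snd y))"

definition insR :: "(nat \<times> nat \<Rightarrow> nat \<times> nat \<Rightarrow> bool) \<Rightarrow> nat \<times> nat \<Rightarrow> nat \<times> nat \<Rightarrow> nat \<times> nat \<Rightarrow> nat \<times> nat \<Rightarrow> bool" where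
  "insR R u v x y = (R x y \<or> (R x u \<and> R v y) \<or> (R x v \<and> R u y))"

definition stp :: "bool \<Rightarrow> nat \<times> nat \<Rightarrow> nat \<times> nat \<Rightarrow> (nat \<times> nat \<Rightarrow> nat \<times> nat \<Rightarrow> bool) \<Rightarrow> nat \<times> nat \<Rightarrow> nat \<times> nat \<Rightarrow> bool" where
  "stp s u v R = (if s then insR R u v else R)"

definition opt :: "bool \<Rightarrow> 'a \<Rightarrow> 'a set \<Rightarrow> 'a set" where
  "opt s e X = (if s then insert e X else X)"

lemma Inv0:
  assumes "\<forall>i\<in>{0,1,2}. B i \<subseteq> sedges n"
  shows "Inv n (UE {0,1,2} B) (R0 (\<lambda>i. tri n (B i)))"
  unfolding Inv_def
proof (intro ballI)
  fix x y assume xy: "x \<in> ports" "y \<in> ports"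
  then have "fst x \<in> {0,1,2}" "snd x \<in> {0,1,2}" "snd y \<in> {0,1,2}" by (auto simp: ports_def)
  then show "connected_in (UE {0,1,2} B) (pv n x) (pv n y) = R0 (\<lambda>i. tri n (B i)) x y"
    unfolding pv_def R0_def using conn_UE_iff[of "fst x" "{0,1,2}" B "replicate n (snd x)" "fst y" "replicate n (snd y)"]
      conn_rel[of "snd x" "snd y"] by auto
qed

lemma Inv_insert:
  assumes "Inv n X R" "u \<in> ports" "v \<in> ports"
  shows "Inv n (insert {pv n u, pv n v} X) (insR R u v)"
  using assms unfolding Inv_def insR_def by (simp add: conn_insert)

lemma Inv_opt:
  assumes "Inv n X R" "u \<in> ports" "v \<in> ports"
  shows "Inv n (opt s {pv n u, pv n v} X) (stp s u v R)"
  using Inv_insert[OF assms] assms(1) by (simp add: opt_def stp_def)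

lemma pv_in: "x \<in> ports \<Longrightarrow> pv n x \<in> sverts (Suc n)"
  by (auto simp: ports_def pv_def rep_sverts)

lemma nu_opt:
  assumes "Inv n X R" "u \<in> ports" "v \<in> ports" "finite X" "{pv n u, pv n v} \<notin> X"
  shows "nu (sverts (Suc n)) (opt s {pv n u, pv n v} X) = nu (sverts (Suc n)) X + (if s \<and> R u v then 1 else 0)"
proof (cases s)
  case True
  have "connected_in X (pv n u) (pv n v) = R u v" using assms unfolding Inv_def by blast
  then show ?thesis using True nu_insert[OF finite_sverts assms(4) pv_in[OF assms(2)] pv_in[OF assms(3)] assms(5)]
    by (simp add: opt_def)
next
  case False then show ?thesis by (simp add: opt_def)
qed

lemma bb_pv: "bb n i j = {pv n (i,j), pv n (j,i)}"
  by (simp add: bb_def pv_def)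

definition gR1 where "gR1 T s1 = stp s1 (0,1) (1,0) (R0 T)"
definition gR2 where "gR2 T s1 s2 = stp s2 (0,2) (2,0) (gR1 T s1)"
definition gR3 where "gR3 T s1 s2 s3 = stp s3 (1,2) (2,1) (gR2 T s1 s2)"
definition gextra :: "(nat \<Rightarrow> tri) \<Rightarrow> bool \<Rightarrow> bool \<Rightarrow> bool \<Rightarrow> int" where
  "gextra T s1 s2 s3 = (if s1 \<and> R0 T (0,1) (1,0) then 1 else 0) + (if s2 \<and> gR1 T s1 (0,2) (2,0) then 1 else 0)
     + (if s3 \<and> gR2 T s1 s2 (1,2) (2,1) then 1 else 0)"
definition gres :: "(nat \<Rightarrow> tri) \<Rightarrow> bool \<Rightarrow> bool \<Rightarrow> bool \<Rightarrow> tri" where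
  "gres T s1 s2 s3 = (gR3 T s1 s2 s3 (0,0) (1,1), gR3 T s1 s2 s3 (0,0) (2,2), gR3 T s1 s2 s3 (1,1) (2,2))"

definition gA :: "nat \<Rightarrow> (nat \<Rightarrow> nat list set set) \<Rightarrow> bool \<Rightarrow> bool \<Rightarrow> bool \<Rightarrow> nat list set set" where
  "gA n B s1 s2 s3 = opt s3 (bb n 1 2) (opt s2 (bb n 0 2) (opt s1 (bb n 0 1) (UE {0,1,2} B)))"

lemma bb_notin_UE: "i \<noteq> j \<Longrightarrow> bb n i j \<notin> UE I B"
proof
  assume "i \<noteq> j" "bb n i j \<in> UE I B"
  then obtain k e where "bb n i j = Cons k ` e" by (auto simp: UE_def imgE_def)
  moreover have "i # replicate n j \<in> bb n i j" "j # replicate n i \<in> bb n i j" by (auto simp: bb_def)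
  ultimately show False using \<open>i \<noteq> j\<close> by auto
qed

lemma bb_neq: "bb n 0 1 \<noteq> bb n 0 2" "bb n 1 2 \<noteq> bb n 0 1" "bb n 1 2 \<noteq> bb n 0 2"
  unfolding bb_def by (auto simp: doubleton_eq_iff)

lemma glue:
  assumes B: "\<forall>i\<in>{0,1,2}. B i \<subseteq> sedges n"
  shows "nu (sverts (Suc n)) (gA n B s1 s2 s3) = (\<Sum>i\<in>{0,1,2}. nu (sverts n) (B i)) + gextra (\<lambda>i. tri n (B i)) s1 s2 s3"
    and "tri (Suc n) (gA n B s1 s2 s3) = gres (\<lambda>i. tri n (B i)) s1 s2 s3"
proof -
  let ?T = "\<lambda>i. tri n (B i)"
  let ?V = "sverts (Suc n)"
  define X0 where "X0 = UE {0,1,2} B"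
  define X1 where "X1 = opt s1 (bb n 0 1) X0"
  define X2 where "X2 = opt s2 (bb n 0 2) X1"
  define X3 where "X3 = opt s3 (bb n 1 2) X2"
  have P: "(0::nat,1::nat) \<in> ports" "(1::nat,0::nat) \<in> ports" "(0::nat,2::nat) \<in> ports" "(2::nat,0::nat) \<in> ports"
    "(1::nat,2::nat) \<in> ports" "(2::nat,1::nat) \<in> ports" "(0::nat,0::nat) \<in> ports" "(1::nat,1::nat) \<in> ports"
    "(2::nat,2::nat) \<in> ports" by (auto simp: ports_def)
  have finB: "finite (B i)" if "i \<in> {0,1,2}" for i using B that finite_sedges finite_subset by metis
  have eB: "edges_in (sverts n) (B i)" if "i \<in> {0,1,2}" for i
    using B that edges_in_sedges edges_in_subset by metis
  have f0: "finite X0" unfolding X0_def using finB by (intro finite_UE) auto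
  have f1: "finite X1" "finite X2" using f0 by (simp_all add: X1_def X2_def opt_def)
  have I0: "Inv n X0 (R0 ?T)" unfolding X0_def by (rule Inv0[OF B])
  have I1: "Inv n X1 (gR1 ?T s1)" unfolding X1_def gR1_def bb_pv by (rule Inv_opt[OF I0 P(1,2)])
  have I2: "Inv n X2 (gR2 ?T s1 s2)" unfolding X2_def gR2_def bb_pv by (rule Inv_opt[OF I1 P(3,4)])
  have I3: "Inv n X3 (gR3 ?T s1 s2 s3)" unfolding X3_def gR3_def bb_pv by (rule Inv_opt[OF I2 P(5,6)])
  have n0: "bb n 0 1 \<notin> X0" unfolding X0_def by (rule bb_notin_UE) simp
  have n1: "bb n 0 2 \<notin> X1" unfolding X1_def X0_def opt_def using bb_notin_UE[of 0 2] bb_neq bb_neq[THEN not_sym] by auto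
  have n2: "bb n 1 2 \<notin> X2" unfolding X2_def X1_def X0_def opt_def using bb_notin_UE[of 1 2] bb_neq bb_neq[THEN not_sym] by auto
  have nu0: "nu ?V X0 = (\<Sum>i\<in>{0,1,2}. nu (sverts n) (B i))"
    unfolding X0_def sverts_Suc
  proof (rule nu_UE)
    show "{} \<notin> B i" if "i \<in> {0,1,2}" for i using edges_in_nonempty[OF eB[OF that]] .
  qed (use finite_sverts finB in auto)
  have "nu ?V X1 = nu ?V X0 + (if s1 \<and> R0 ?T (0,1) (1,0) then 1 else 0)"
    unfolding X1_def using nu_opt[OF I0 P(1,2) f0] n0 by (simp add: bb_pv)
  moreover have "nu ?V X2 = nu ?V X1 + (if s2 \<and> gR1 ?T s1 (0,2) (2,0) then 1 else 0)"
    unfolding X2_def using nu_opt[OF I1 P(3,4) f1(1)] n1 by (simp add: bb_pv)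
  moreover have "nu ?V X3 = nu ?V X2 + (if s3 \<and> gR2 ?T s1 s2 (1,2) (2,1) then 1 else 0)"
    unfolding X3_def using nu_opt[OF I2 P(5,6) f1(2)] n2 by (simp add: bb_pv)
  ultimately show "nu ?V (gA n B s1 s2 s3) = (\<Sum>i\<in>{0,1,2}. nu (sverts n) (B i)) + gextra ?T s1 s2 s3"
    using nu0 unfolding gA_def X3_def X2_def X1_def X0_def gextra_def by simp
  have pv0: "replicate (Suc n) p = pv n (p,p)" for p by (simp add: pv_def)
  show "tri (Suc n) (gA n B s1 s2 s3) = gres ?T s1 s2 s3"
    using I3 P(7,8,9) unfolding Inv_def tri_def gres_def pv0 gA_def X3_def X2_def X1_def X0_def by simp
qed


definition wt :: "nat \<Rightarrow> nat list set set \<Rightarrow> real" where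
  "wt n A = (if nu (sverts n) A = 0 then 1 else 0)"

definition cnt :: "nat \<Rightarrow> tri \<Rightarrow> real" where
  "cnt n t = (\<Sum>A\<in>Pow (sedges n). if tri n A = t then wt n A else 0)"

definition Valid :: "tri set" where
  "Valid = {(True,True,True),(False,False,True),(True,False,False),(False,True,False),(False,False,False)}"

lemma finite_Valid: "finite Valid" by (simp add: Valid_def)

lemma tri_valid: "tri n A \<in> Valid"
proof -
  let ?r = "replicate n"
  have t1: "connected_in A (?r 0) (?r 1) \<Longrightarrow> connected_in A (?r 0) (?r 2) \<Longrightarrow> connected_in A (?r 1) (?r 2)"
    using conn_trans conn_sym by metis
  have t2: "connected_in A (?r 0) (?r 1) \<Longrightarrow> connected_in A (?r 1) (?r 2) \<Longrightarrow> connected_in A (?r 0) (?r 2)"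
    using conn_trans by metis
  have t3: "connected_in A (?r 0) (?r 2) \<Longrightarrow> connected_in A (?r 1) (?r 2) \<Longrightarrow> connected_in A (?r 0) (?r 1)"
    using conn_trans conn_sym by metis
  show ?thesis unfolding tri_def Valid_def using t1 t2 t3 by auto
qed

lemma group_sum:
  "(\<Sum>A\<in>Pow (sedges n). wt n A * F (tri n A)) = (\<Sum>t\<in>Valid. F t * cnt n t)"
proof -
  have "(\<Sum>A\<in>Pow (sedges n). wt n A * F (tri n A))
      = (\<Sum>A\<in>Pow (sedges n). \<Sum>t\<in>Valid. if tri n A = t then wt n A * F t else 0)"
    using tri_valid finite_Valid by (intro sum.cong refl) (simp add: sum.delta)
  also have "\<dots> = (\<Sum>t\<in>Valid. \<Sum>A\<in>Pow (sedges n). if tri n A = t then wt n A * F t else 0)"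
    by (rule sum.swap)
  also have "\<dots> = (\<Sum>t\<in>Valid. F t * cnt n t)"
    unfolding cnt_def sum_distrib_left by (intro sum.cong refl) (simp add: mult.commute)
  finally show ?thesis .
qed

lemma wt_nonneg: "wt n A \<ge> 0" by (simp add: wt_def)

definition bsel :: "'b \<Rightarrow> 'b \<Rightarrow> 'b \<Rightarrow> nat \<Rightarrow> 'b" where
  "bsel x y z i = (if i = 0 then x else if i = 1 then y else z)"

lemma mem_gA: "x \<in> gA n B s1 s2 s3 \<longleftrightarrow> x \<in> UE {0,1,2} B \<or> (x = bb n 0 1 \<and> s1) \<or> (x = bb n 0 2 \<and> s2) \<or> (x = bb n 1 2 \<and> s3)"
  by (auto simp: gA_def opt_def)

lemma Cons_img_UE:
  assumes "e \<noteq> {}" "i \<in> I"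
  shows "Cons i ` e \<in> UE I B \<longleftrightarrow> e \<in> B i"
proof
  assume "Cons i ` e \<in> UE I B"
  then obtain j e' where j: "j \<in> I" "e' \<in> B j" "Cons i ` e = Cons j ` e'" by (auto simp: UE_def imgE_def)
  obtain x where "x \<in> e" using assms(1) by blast
  then have "i # x \<in> Cons j ` e'" using j(3) by blast
  then have "j = i" by auto
  then have "e = e'" using j(3) inj_image_eq_iff[OF inj_Cons'] by metis
  then show "e \<in> B i" using j \<open>j = i\<close> by simp
next
  assume "e \<in> B i" then show "Cons i ` e \<in> UE I B" using assms by (auto simp: UE_def imgE_def)
qed

lemma Cons_img_bb:
  assumes "e \<noteq> {}" "a \<noteq> b"
  shows "Cons i ` e \<noteq> bb n a b"
proof
  assume h: "Cons i ` e = bb n a b"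
  have "a # replicate n b \<in> Cons i ` e" "b # replicate n a \<in> Cons i ` e" using h by (auto simp: bb_def)
  then show False using assms(2) by auto
qed

lemma bb_notin_UE': "bb n a b \<notin> UE I B" if "a \<noteq> b"
  using bb_notin_UE[OF that] .

definition Dm :: "nat \<Rightarrow> (nat list set set \<times> nat list set set \<times> nat list set set \<times> bool \<times> bool \<times> bool) set" where
  "Dm n = Pow (sedges n) \<times> Pow (sedges n) \<times> Pow (sedges n) \<times> UNIV \<times> UNIV \<times> UNIV"

definition Phi where
  "Phi n = (\<lambda>(B0,B1,B2,s1,s2,s3). gA n (bsel B0 B1 B2) s1 s2 s3)"

definition dec :: "nat \<Rightarrow> nat \<Rightarrow> nat list set set \<Rightarrow> nat list set set" where
  "dec n i A = {e \<in> sedges n. Cons i ` e \<in> A}"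

definition Psi where
  "Psi n A = (dec n 0 A, dec n 1 A, dec n 2 A, bb n 0 1 \<in> A, bb n 0 2 \<in> A, bb n 1 2 \<in> A)"

lemma sedges_ne: "e \<in> sedges n \<Longrightarrow> e \<noteq> {}"
  using edges_in_nonempty[OF edges_in_sedges] by blast

lemma bsel_sub: "B0 \<subseteq> E \<Longrightarrow> B1 \<subseteq> E \<Longrightarrow> B2 \<subseteq> E \<Longrightarrow> \<forall>i\<in>{0,1,2}. bsel B0 B1 B2 i \<subseteq> E"
  by (simp add: bsel_def)

lemma bij_Phi: "bij_betw (Phi n) (Dm n) (Pow (sedges (Suc n)))"
proof (rule bij_betw_byWitness[where f' = "Psi n"])
  show "\<forall>d\<in>Dm n. Psi n (Phi n d) = d"
  proof
    fix d assume "d \<in> Dm n"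
    then obtain B0 B1 B2 s1 s2 s3 where d: "d = (B0,B1,B2,s1,s2,s3)" "B0 \<subseteq> sedges n" "B1 \<subseteq> sedges n" "B2 \<subseteq> sedges n"
      by (auto simp: Dm_def)
    let ?B = "bsel B0 B1 B2"
    have decB: "dec n i (gA n ?B s1 s2 s3) = ?B i" if "i \<in> {0,1,2}" for i
    proof -
      have "e \<in> dec n i (gA n ?B s1 s2 s3) \<longleftrightarrow> e \<in> ?B i" for e
      proof (cases "e \<in> sedges n")
        case True
        then have ne: "e \<noteq> {}" by (rule sedges_ne)
        show ?thesis unfolding dec_def mem_gA using True Cons_img_UE[OF ne that] Cons_img_bb[OF ne] by auto
      next
        case False then show ?thesis using d that by (auto simp: dec_def bsel_def)
      qed
      then show ?thesis by blast
    qed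
    have bm: "bb n 0 1 \<in> gA n ?B s1 s2 s3 \<longleftrightarrow> s1" "bb n 0 2 \<in> gA n ?B s1 s2 s3 \<longleftrightarrow> s2"
      "bb n 1 2 \<in> gA n ?B s1 s2 s3 \<longleftrightarrow> s3"
      unfolding mem_gA using bb_notin_UE'[of 0 1] bb_notin_UE'[of 0 2] bb_notin_UE'[of 1 2] bb_neq bb_neq[THEN not_sym]
      by auto
    show "Psi n (Phi n d) = d" using decB[of 0] decB[of 1] decB[of 2] bm
      by (simp add: d Phi_def Psi_def bsel_def)
  qed
next
  show "\<forall>A\<in>Pow (sedges (Suc n)). Phi n (Psi n A) = A"
  proof
    fix A assume A: "A \<in> Pow (sedges (Suc n))"
    let ?B = "bsel (dec n 0 A) (dec n 1 A) (dec n 2 A)"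
    have "x \<in> gA n ?B (bb n 0 1 \<in> A) (bb n 0 2 \<in> A) (bb n 1 2 \<in> A) \<longleftrightarrow> x \<in> A" for x
    proof
      assume "x \<in> gA n ?B (bb n 0 1 \<in> A) (bb n 0 2 \<in> A) (bb n 1 2 \<in> A)"
      then show "x \<in> A" unfolding mem_gA by (auto simp: UE_def imgE_def dec_def bsel_def)
    next
      assume x: "x \<in> A"
      then have "x \<in> sedges (Suc n)" using A by auto
      then consider "x \<in> UE {0,1,2} (\<lambda>_. sedges n)" | "x = bb n 0 1" | "x = bb n 0 2" | "x = bb n 1 2"
        unfolding sedges_Suc by blast
      then show "x \<in> gA n ?B (bb n 0 1 \<in> A) (bb n 0 2 \<in> A) (bb n 1 2 \<in> A)"
      proof cases
        case 1
        then obtain i e where "i \<in> {0,1,2}" "e \<in> sedges n" "x = Cons i ` e" by (auto simp: UE_def imgE_def)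
        then show ?thesis using x unfolding mem_gA by (auto simp: UE_def imgE_def dec_def bsel_def)
      qed (use x in \<open>auto simp: mem_gA\<close>)
    qed
    then show "Phi n (Psi n A) = A" by (auto simp: Phi_def Psi_def)
  qed
next
  show "Phi n ` Dm n \<subseteq> Pow (sedges (Suc n))"
  proof
    fix A assume "A \<in> Phi n ` Dm n"
    then obtain B0 B1 B2 s1 s2 s3 where d: "A = gA n (bsel B0 B1 B2) s1 s2 s3" "B0 \<subseteq> sedges n" "B1 \<subseteq> sedges n" "B2 \<subseteq> sedges n"
      by (auto simp: Dm_def Phi_def)
    have "UE {0,1,2} (bsel B0 B1 B2) \<subseteq> UE {0,1,2} (\<lambda>_. sedges n)"
      using bsel_sub[OF d(2-4)] unfolding UE_def imgE_def by blast
    then show "A \<in> Pow (sedges (Suc n))"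
      unfolding d(1) sedges_Suc by (auto simp: mem_gA)
  qed
next
  show "Psi n ` Pow (sedges (Suc n)) \<subseteq> Dm n" by (auto simp: Psi_def Dm_def dec_def)
qed


definition Gs :: "tri \<Rightarrow> tri \<Rightarrow> tri \<Rightarrow> tri \<Rightarrow> real" where
  "Gs t0 t1 t2 t = (\<Sum>s1\<in>UNIV. \<Sum>s2\<in>UNIV. \<Sum>s3\<in>UNIV.
      if gextra (bsel t0 t1 t2) s1 s2 s3 = 0 \<and> gres (bsel t0 t1 t2) s1 s2 s3 = t then 1 else 0)"

lemma gextra_nonneg: "0 \<le> gextra T s1 s2 s3" by (simp add: gextra_def)

lemma tri_bsel: "(\<lambda>i. tri n (bsel B0 B1 B2 i)) = bsel (tri n B0) (tri n B1) (tri n B2)"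
  by (rule ext) (simp add: bsel_def)

lemma nu_sedges_nonneg: "B \<subseteq> sedges n \<Longrightarrow> 0 \<le> nu (sverts n) B"
  by (rule nu_nonneg[OF finite_sverts finite_subset[OF _ finite_sedges] edges_in_subset[OF edges_in_sedges]])

lemma f_gA:
  assumes "B0 \<subseteq> sedges n" "B1 \<subseteq> sedges n" "B2 \<subseteq> sedges n"
  shows "(if tri (Suc n) (gA n (bsel B0 B1 B2) s1 s2 s3) = t then wt (Suc n) (gA n (bsel B0 B1 B2) s1 s2 s3) else 0)
    = wt n B0 * (wt n B1 * (wt n B2 *
        (if gextra (bsel (tri n B0) (tri n B1) (tri n B2)) s1 s2 s3 = 0 \<and>
            gres (bsel (tri n B0) (tri n B1) (tri n B2)) s1 s2 s3 = t then 1 else 0)))"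
proof -
  have B: "\<forall>i\<in>{0,1,2}. bsel B0 B1 B2 i \<subseteq> sedges n" by (rule bsel_sub[OF assms])
  note g = glue[OF B, of s1 s2 s3, unfolded tri_bsel]
  have s: "(\<Sum>i\<in>{0,1,2}. nu (sverts n) (bsel B0 B1 B2 i)) = nu (sverts n) B0 + nu (sverts n) B1 + nu (sverts n) B2"
    by (simp add: bsel_def)
  have n0: "0 \<le> nu (sverts n) B0" "0 \<le> nu (sverts n) B1" "0 \<le> nu (sverts n) B2"
    using assms by (simp_all add: nu_sedges_nonneg)
  have n1: "0 \<le> gextra (bsel (tri n B0) (tri n B1) (tri n B2)) s1 s2 s3" by (rule gextra_nonneg)
  show ?thesis unfolding wt_def g(2) g(1)[unfolded s] using n0 n1 by auto
qed

lemma nested_Dm: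
  "(\<Sum>d\<in>Dm n. g d) = (\<Sum>B0\<in>Pow (sedges n). \<Sum>B1\<in>Pow (sedges n). \<Sum>B2\<in>Pow (sedges n).
       \<Sum>s1\<in>UNIV. \<Sum>s2\<in>UNIV. \<Sum>s3\<in>UNIV. g (B0,B1,B2,s1,s2,s3))"
  by (simp add: Dm_def sum.cartesian_product)

lemma Phi_simp: "Phi n (B0,B1,B2,s1,s2,s3) = gA n (bsel B0 B1 B2) s1 s2 s3"
  by (simp add: Phi_def)

lemma cnt_Suc:
  "cnt (Suc n) t = (\<Sum>t0\<in>Valid. (\<Sum>t1\<in>Valid. (\<Sum>t2\<in>Valid. Gs t0 t1 t2 t * cnt n t2) * cnt n t1) * cnt n t0)"
proof -
  let ?P = "Pow (sedges n)"
  let ?f = "\<lambda>A. if tri (Suc n) A = t then wt (Suc n) A else 0"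
  have "cnt (Suc n) t = (\<Sum>d\<in>Dm n. ?f (Phi n d))"
    unfolding cnt_def by (rule sum.reindex_bij_betw[OF bij_Phi, symmetric])
  also have "\<dots> = (\<Sum>B0\<in>?P. \<Sum>B1\<in>?P. \<Sum>B2\<in>?P. \<Sum>s1\<in>UNIV. \<Sum>s2\<in>UNIV. \<Sum>s3\<in>UNIV.
       ?f (gA n (bsel B0 B1 B2) s1 s2 s3))"
    unfolding nested_Dm Phi_simp by (rule refl)
  also have "\<dots> = (\<Sum>B0\<in>?P. \<Sum>B1\<in>?P. \<Sum>B2\<in>?P. wt n B0 * (wt n B1 * (wt n B2 * Gs (tri n B0) (tri n B1) (tri n B2) t)))"
    by (intro sum.cong refl) (simp add: f_gA Gs_def sum_distrib_left)
  also have "\<dots> = (\<Sum>B0\<in>?P. \<Sum>B1\<in>?P. wt n B0 * (wt n B1 * (\<Sum>t2\<in>Valid. Gs (tri n B0) (tri n B1) t2 t * cnt n t2)))"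
  proof (intro sum.cong refl)
    fix B0 B1
    show "(\<Sum>B2\<in>?P. wt n B0 * (wt n B1 * (wt n B2 * Gs (tri n B0) (tri n B1) (tri n B2) t))) =
          wt n B0 * (wt n B1 * (\<Sum>t2\<in>Valid. Gs (tri n B0) (tri n B1) t2 t * cnt n t2))"
      using group_sum[of n "\<lambda>t2. Gs (tri n B0) (tri n B1) t2 t"] by (simp add: sum_distrib_left[symmetric])
  qed
  also have "\<dots> = (\<Sum>B0\<in>?P. wt n B0 * (\<Sum>t1\<in>Valid. (\<Sum>t2\<in>Valid. Gs (tri n B0) t1 t2 t * cnt n t2) * cnt n t1))"
  proof (intro sum.cong refl)
    fix B0
    show "(\<Sum>B1\<in>?P. wt n B0 * (wt n B1 * (\<Sum>t2\<in>Valid. Gs (tri n B0) (tri n B1) t2 t * cnt n t2))) =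
          wt n B0 * (\<Sum>t1\<in>Valid. (\<Sum>t2\<in>Valid. Gs (tri n B0) t1 t2 t * cnt n t2) * cnt n t1)"
      using group_sum[of n "\<lambda>t1. \<Sum>t2\<in>Valid. Gs (tri n B0) t1 t2 t * cnt n t2"] by (simp add: sum_distrib_left[symmetric])
  qed
  also have "\<dots> = (\<Sum>t0\<in>Valid. (\<Sum>t1\<in>Valid. (\<Sum>t2\<in>Valid. Gs t0 t1 t2 t * cnt n t2) * cnt n t1) * cnt n t0)"
    by (rule group_sum[where F = "\<lambda>t0. \<Sum>t1\<in>Valid. (\<Sum>t2\<in>Valid. Gs t0 t1 t2 t * cnt n t2) * cnt n t1"])
  finally show ?thesis .
qed


lemma UNIV_bool': "(UNIV :: bool set) = {False, True}" by auto

lemma Valid_eq: "Valid = {(True,True,True),(False,False,True),(True,False,False),(False,True,False),(False,False,False)}"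
  by (simp add: Valid_def add.assoc)

lemma sumV: "(\<Sum>t\<in>Valid. f t) = f (True,True,True) + f (False,False,True) + f (True,False,False) + f (False,True,False) + f (False,False,False)"
  by (simp add: Valid_def add.assoc)

lemma Gs_TTT_test: "Gs (True,True,True) (True,True,True) (True,True,True) (True,True,True) = 3"
  by (simp add: Gs_def UNIV_bool' gextra_def gres_def gR1_def gR2_def gR3_def stp_def insR_def R0_def rel_def bsel_def)

lemmas gsimps = Gs_def UNIV_bool' gextra_def gres_def gR1_def gR2_def gR3_def stp_def insR_def R0_def rel_def bsel_def


definition lbl :: "tri \<Rightarrow> nat \<Rightarrow> nat" where
  "lbl t q = (case t of (a,b,c) \<Rightarrow> if q = 0 then 0 else if q = 1 then (if a then 0 else 1) else (if b then 0 else if c then 1 else 2))"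

definition LL0 :: "tri \<Rightarrow> tri \<Rightarrow> tri \<Rightarrow> nat list" where
  "LL0 t0 t1 t2 = [lbl t0 0, lbl t0 1, lbl t0 2, 3 + lbl t1 0, 3 + lbl t1 1, 3 + lbl t1 2, 6 + lbl t2 0, 6 + lbl t2 1, 6 + lbl t2 2]"

definition relab2 :: "nat \<Rightarrow> nat \<Rightarrow> nat list \<Rightarrow> nat list" where
  "relab2 a b L = map (\<lambda>z. if z = a then b else z) L"

definition relabL :: "bool \<Rightarrow> nat \<Rightarrow> nat \<Rightarrow> nat list \<Rightarrow> nat list" where
  "relabL s iu iv L = (if s then relab2 (L ! iv) (L ! iu) L else L)"

definition "LL1 t0 t1 t2 s1 = relabL s1 1 3 (LL0 t0 t1 t2)"
definition "LL2 t0 t1 t2 s1 s2 = relabL s2 2 6 (LL1 t0 t1 t2 s1)"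
definition "LL3 t0 t1 t2 s1 s2 s3 = relabL s3 5 7 (LL2 t0 t1 t2 s1 s2)"

definition eqi :: "nat \<Rightarrow> nat \<Rightarrow> nat list \<Rightarrow> bool" where
  "eqi i j L = (L ! i = L ! j)"

definition resOf :: "nat list \<Rightarrow> tri" where
  "resOf L = (L ! 0 = L ! 4, L ! 0 = L ! 8, L ! 4 = L ! 8)"

definition gextraLL :: "tri \<Rightarrow> tri \<Rightarrow> tri \<Rightarrow> bool \<Rightarrow> bool \<Rightarrow> bool \<Rightarrow> int" where
  "gextraLL t0 t1 t2 s1 s2 s3 = (if s1 \<and> eqi 1 3 (LL0 t0 t1 t2) then 1 else 0)
     + (if s2 \<and> eqi 2 6 (LL1 t0 t1 t2 s1) then 1 else 0)
     + (if s3 \<and> eqi 5 7 (LL2 t0 t1 t2 s1 s2) then 1 else 0)"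

definition gresLL :: "tri \<Rightarrow> tri \<Rightarrow> tri \<Rightarrow> bool \<Rightarrow> bool \<Rightarrow> bool \<Rightarrow> tri" where
  "gresLL t0 t1 t2 s1 s2 s3 = resOf (LL3 t0 t1 t2 s1 s2 s3)"

definition GsLL :: "tri \<Rightarrow> tri \<Rightarrow> tri \<Rightarrow> tri \<Rightarrow> real" where
  "GsLL t0 t1 t2 t = (\<Sum>s1\<in>UNIV. \<Sum>s2\<in>UNIV. \<Sum>s3\<in>UNIV.
      if gextraLL t0 t1 t2 s1 s2 s3 = 0 \<and> gresLL t0 t1 t2 s1 s2 s3 = t then 1 else 0)"

lemma sumB: "(\<Sum>s\<in>(UNIV::bool set). f s) = f False + f True"
  by (simp add: UNIV_bool')

lemma lbl_simps:
  "lbl (True,True,True) 0 = 0" "lbl (True,True,True) 1 = 0" "lbl (True,True,True) 2 = 0"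
  "lbl (False,False,True) 0 = 0" "lbl (False,False,True) 1 = 1" "lbl (False,False,True) 2 = 1"
  "lbl (True,False,False) 0 = 0" "lbl (True,False,False) 1 = 0" "lbl (True,False,False) 2 = 2"
  "lbl (False,True,False) 0 = 0" "lbl (False,True,False) 1 = 1" "lbl (False,True,False) 2 = 0"
  "lbl (False,False,False) 0 = 0" "lbl (False,False,False) 1 = 1" "lbl (False,False,False) 2 = 2"
  by (simp_all add: lbl_def)

lemmas llsimps = gextraLL_def gresLL_def LL1_def LL2_def LL3_def relabL_def LL0_def lbl_simps

definition allS :: "(bool \<times> bool \<times> bool) list" where
  "allS = [(False,False,False),(False,False,True),(False,True,False),(False,True,True),(True,False,False),(True,False,True),(True,True,False),(True,True,True)]"
definition GnLL :: "tri \<Rightarrow> tri \<Rightarrow> tri \<Rightarrow> tri \<Rightarrow> nat" where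
  "GnLL t0 t1 t2 t = length (filter (\<lambda>(s1,s2,s3). gextraLL t0 t1 t2 s1 s2 s3 = 0 \<and> gresLL t0 t1 t2 s1 s2 s3 = t) allS)"
definition trips :: "(tri \<times> tri \<times> tri) list" where
  "trips = [((True,True,True), (True,True,True), (True,True,True)), ((True,True,True), (True,True,True), (False,False,True)), ((True,True,True), (True,True,True), (True,False,False)), ((True,True,True), (True,True,True), (False,True,False)), ((True,True,True), (True,True,True), (False,False,False)), ((True,True,True), (False,False,True), (True,True,True)), ((True,True,True), (False,False,True), (False,False,True)), ((True,True,True), (False,False,True), (True,False,False)), ((True,True,True), (False,False,True), (False,True,False)), ((True,True,True), (False,False,True), (False,False,False)), ((True,True,True), (True,False,False), (True,True,True)), ((True,True,True), (True,False,False), (False,False,True)), ((True,True,True), (True,False,False), (True,False,False)), ((True,True,True), (True,False,False), (False,True,False)), ((True,True,True), (True,False,False), (False,False,False)), ((True,True,True), (False,True,False), (True,True,True)), ((True,True,True), (False,True,False), (False,False,True)), ((True,True,True), (False,True,False), (True,False,False)), ((True,True,True), (False,True,False), (False,True,False)), ((True,True,True), (False,True,False), (False,False,False)), ((True,True,True), (False,False,False), (True,True,True)), ((True,True,True), (False,False,False), (False,False,True)), ((True,True,True), (False,False,False), (True,False,False)), ((True,True,True), (False,False,False), (False,True,False)), ((True,True,True), (False,False,False), (False,False,False)), ((False,False,True), (True,True,True), (True,True,True)), ((False,False,True), (True,True,True), (False,False,True)), ((False,False,True), (True,True,True), (True,False,False)), ((False,False,True), (True,True,True), (False,True,False)), ((False,False,True),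 (True,True,True), (False,False,False)), ((False,False,True), (False,False,True), (True,True,True)), ((False,False,True), (False,False,True), (False,False,True)), ((False,False,True), (False,False,True), (True,False,False)), ((False,False,True), (False,False,True), (False,True,False)), ((False,False,True), (False,False,True), (False,False,False)), ((False,False,True), (True,False,False), (True,True,True)), ((False,False,True), (True,False,False), (False,False,True)), ((False,False,True), (True,False,False), (True,False,False)), ((False,False,True), (True,False,False), (False,True,False)), ((False,False,True), (True,False,False), (False,False,False)), ((False,False,True), (False,True,False), (True,True,True)), ((False,False,True), (False,True,False), (False,False,True)), ((False,False,True), (False,True,False), (True,False,False)), ((False,False,True), (False,True,False), (False,True,False)), ((False,False,True), (False,True,False), (False,False,False)), ((False,False,True), (False,False,False), (True,True,True)), ((False,False,True), (False,False,False), (False,False,True)), ((False,False,True), (False,False,False), (True,False,False)), ((False,False,True), (False,False,False), (False,True,False)), ((False,False,True), (False,False,False), (False,False,False)), ((True,False,False), (True,True,True), (True,True,True)), ((True,False,False), (True,True,True), (False,False,True)), ((True,False,False), (True,True,True), (True,False,False)), ((True,False,False), (True,True,True), (False,True,False)), ((True,False,False), (True,True,True), (False,False,False)), ((True,False,False), (False,False,True), (True,True,True)), ((True,False,False), (False,False,True), (False,False,True)), ((True,False,False), (False,False,True), (True,False,False)), ((True,False,False), (False,False,True), (False,True,False)), ((True,False,False), (False,False,True), (False,False,False)), ((True,False,False), (True,False,False), (True,True,True)), ((True,False,False), (True,False,False), (False,False,True)), ((True,False,False), (True,False,False), (True,False,False)), ((True,False,False), (True,False,False), (False,True,False)), ((True,False,False),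 (True,False,False), (False,False,False)), ((True,False,False), (False,True,False), (True,True,True)), ((True,False,False), (False,True,False), (False,False,True)), ((True,False,False), (False,True,False), (True,False,False)), ((True,False,False), (False,True,False), (False,True,False)), ((True,False,False), (False,True,False), (False,False,False)), ((True,False,False), (False,False,False), (True,True,True)), ((True,False,False), (False,False,False), (False,False,True)), ((True,False,False), (False,False,False), (True,False,False)), ((True,False,False), (False,False,False), (False,True,False)), ((True,False,False), (False,False,False), (False,False,False)), ((False,True,False), (True,True,True), (True,True,True)), ((False,True,False), (True,True,True), (False,False,True)), ((False,True,False), (True,True,True), (True,False,False)), ((False,True,False), (True,True,True), (False,True,False)), ((False,True,False), (True,True,True), (False,False,False)), ((False,True,False), (False,False,True), (True,True,True)), ((False,True,False), (False,False,True), (False,False,True)), ((False,True,False), (False,False,True), (True,False,False)), ((False,True,False), (False,False,True), (False,True,False)), ((False,True,False), (False,False,True), (False,False,False)), ((False,True,False), (True,False,False), (True,True,True)), ((False,True,False), (True,False,False), (False,False,True)), ((False,True,False), (True,False,False), (True,False,False)), ((False,True,False), (True,False,False), (False,True,False)), ((False,True,False), (True,False,False), (False,False,False)), ((False,True,False), (False,True,False), (True,True,True)), ((False,True,False), (False,True,False), (False,False,True)), ((False,True,False), (False,True,False), (True,False,False)), ((False,True,False), (False,True,False), (False,True,False)), ((False,True,False), (False,True,False), (False,False,False)), ((False,True,False), (False,False,False), (True,True,True)), ((False,True,False), (False,False,False), (False,False,True)), ((False,True,False), (False,False,False), (True,False,False)), ((False,True,False), (False,False,False), (False,True,False)), ((False,True,False),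 (False,False,False), (False,False,False)), ((False,False,False), (True,True,True), (True,True,True)), ((False,False,False), (True,True,True), (False,False,True)), ((False,False,False), (True,True,True), (True,False,False)), ((False,False,False), (True,True,True), (False,True,False)), ((False,False,False), (True,True,True), (False,False,False)), ((False,False,False), (False,False,True), (True,True,True)), ((False,False,False), (False,False,True), (False,False,True)), ((False,False,False), (False,False,True), (True,False,False)), ((False,False,False), (False,False,True), (False,True,False)), ((False,False,False), (False,False,True), (False,False,False)), ((False,False,False), (True,False,False), (True,True,True)), ((False,False,False), (True,False,False), (False,False,True)), ((False,False,False), (True,False,False), (True,False,False)), ((False,False,False), (True,False,False), (False,True,False)), ((False,False,False), (True,False,False), (False,False,False)), ((False,False,False), (False,True,False), (True,True,True)), ((False,False,False), (False,True,False), (False,False,True)), ((False,False,False), (False,True,False), (True,False,False)), ((False,False,False), (False,True,False), (False,True,False)), ((False,False,False), (False,True,False), (False,False,False)), ((False,False,False), (False,False,False), (True,True,True)), ((False,False,False), (False,False,False), (False,False,True)), ((False,False,False), (False,False,False), (True,False,False)), ((False,False,False), (False,False,False), (False,True,False)), ((False,False,False), (False,False,False), (False,False,False))]"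

lemma tab_TTT: "map (\<lambda>(a,b,c). GnLL a b c (True,True,True)) trips = [3, 2, 0, 2, 0, 2, 0, 0, 0, 0, 2, 0, 0, 2, 0, 0, 0, 0, 0, 0, 0, 0, 0, 0, 0, 0, 0, 0, 0, 0, 0, 0, 0, 0, 0, 0, 0, 0, 0, 0, 0, 0, 0, 0, 0, 0, 0, 0, 0, 0, 2, 2, 0, 0, 0, 0, 0, 0, 0, 0, 0, 0, 0, 0, 0, 0, 0, 0, 0, 0, 0, 0, 0, 0, 0, 2, 0, 0, 0, 0, 2, 0, 0, 0, 0, 0, 0, 0, 0, 0, 0, 0, 0, 0, 0, 0, 0, 0, 0, 0, 0, 0, 0, 0, 0, 0, 0, 0, 0, 0, 0, 0, 0, 0, 0, 0, 0, 0, 0, 0, 0, 0, 0, 0, 0]"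
  by code_simp
lemma tab_FFT: "map (\<lambda>(a,b,c). GnLL a b c (False,False,True)) trips = [1, 2, 0, 0, 0, 2, 4, 0, 0, 0, 0, 0, 0, 0, 0, 0, 0, 0, 0, 0, 0, 0, 0, 0, 0, 4, 4, 0, 2, 0, 4, 4, 0, 0, 0, 2, 0, 0, 2, 0, 0, 0, 0, 0, 0, 0, 0, 0, 0, 0, 2, 2, 0, 0, 0, 4, 4, 0, 0, 0, 0, 0, 0, 0, 0, 0, 0, 0, 0, 0, 0, 0, 0, 0, 0, 2, 4, 0, 0, 0, 2, 4, 0, 0, 0, 0, 0, 0, 0, 0, 0, 0, 0, 0, 0, 0, 0, 0, 0, 0, 4, 4, 0, 0, 0, 4, 4, 0, 0, 0, 0, 0, 0, 0, 0, 0, 0, 0, 0, 0, 0, 0, 0, 0, 0]"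
  by code_simp

lemma tab_FFF: "map (\<lambda>(a,b,c). GnLL a b c (False,False,False)) trips = [1, 2, 3, 2, 4, 2, 4, 6, 4, 8, 2, 4, 4, 2, 4, 3, 6, 7, 4, 8, 4, 8, 8, 4, 8, 3, 4, 7, 6, 8, 4, 4, 8, 8, 8, 6, 8, 8, 6, 8, 7, 8, 7, 8, 8, 8, 8, 8, 8, 8, 2, 2, 4, 4, 4, 4, 4, 8, 8, 8, 4, 4, 4, 4, 4, 6, 6, 8, 8, 8, 8, 8, 8, 8, 8, 2, 4, 6, 4, 8, 2, 4, 6, 4, 8, 4, 8, 8, 4, 8, 4, 8, 8, 4, 8, 4, 8, 8, 4, 8, 4, 4, 8, 8, 8, 4, 4, 8, 8, 8, 8, 8, 8, 8, 8, 8, 8, 8, 8, 8, 8, 8, 8, 8, 8]"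
  by code_simp


lemmas tabs = tab_TTT[unfolded trips_def list.map prod.case list.inject] tab_FFT[unfolded trips_def list.map prod.case list.inject] tab_FFF[unfolded trips_def list.map prod.case list.inject]

definition idx :: "nat \<times> nat \<Rightarrow> nat" where "idx x = 3 * fst x + snd x"

lemma idx_vals: "idx (0,1) = 1" "idx (1,0) = 3" "idx (0,2) = 2" "idx (2,0) = 6" "idx (1,2) = 5" "idx (2,1) = 7"
  "idx (0,0) = 0" "idx (1,1) = 4" "idx (2,2) = 8" by (simp_all add: idx_def)

lemma ports_lt: "x \<in> ports \<Longrightarrow> fst x < 3 \<and> snd x < 3"
  by (auto simp: ports_def)

lemma idx_lt: "x \<in> ports \<Longrightarrow> idx x < 9"
  by (auto simp: ports_def idx_def)

lemma len_LL0: "length (LL0 t0 t1 t2) = 9" by (simp add: LL0_def)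
lemma len_relabL: "length (relabL s a b L) = length L" by (simp add: relabL_def relab2_def)

lemma lt3: "(i::nat) < 3 \<Longrightarrow> i = 0 \<or> i = 1 \<or> i = 2" by presburger

lemma LL0_nth: "i < 3 \<Longrightarrow> q < 3 \<Longrightarrow> LL0 t0 t1 t2 ! (3*i+q) = 3*i + lbl (bsel t0 t1 t2 i) q"
proof -
  assume "i < 3" "q < 3"
  then consider "i = 0" | "i = 1" | "i = 2" using lt3 by blast
  then show ?thesis
  proof cases
    case 1 then show ?thesis using lt3[OF \<open>q < 3\<close>] by (auto simp: LL0_def bsel_def)
  next
    case 2 then show ?thesis using lt3[OF \<open>q < 3\<close>] by (auto simp: LL0_def bsel_def)
  next
    case 3 then show ?thesis using lt3[OF \<open>q < 3\<close>] by (auto simp: LL0_def bsel_def)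
  qed
qed

lemma lbl_lt: "lbl t q < 3"
proof -
  obtain a b c where "t = (a,b,c)" by (cases t) auto
  then show ?thesis by (simp add: lbl_def)
qed

lemma rel_lbl: "t \<in> Valid \<Longrightarrow> p < 3 \<Longrightarrow> q < 3 \<Longrightarrow> rel t p q \<longleftrightarrow> lbl t p = lbl t q"
proof -
  assume a: "t \<in> Valid" "p < 3" "q < 3"
  have "p = 0 \<or> p = 1 \<or> p = 2" "q = 0 \<or> q = 1 \<or> q = 2" using lt3 a by auto
  then show ?thesis using a(1) unfolding Valid_def by (elim disjE insertE; simp add: rel_def lbl_def)
qed

lemma arith3: "(a::nat) < 3 \<Longrightarrow> b < 3 \<Longrightarrow> 3*i + a = 3*j + b \<longleftrightarrow> i = j \<and> a = b" by arith

lemma bsel_valid: "t0 \<in> Valid \<Longrightarrow> t1 \<in> Valid \<Longrightarrow> t2 \<in> Valid \<Longrightarrow> bsel t0 t1 t2 i \<in> Valid"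
  by (simp add: bsel_def)

definition corr :: "(nat \<times> nat \<Rightarrow> nat \<times> nat \<Rightarrow> bool) \<Rightarrow> nat list \<Rightarrow> bool" where
  "corr R L \<longleftrightarrow> (\<forall>x\<in>ports. \<forall>y\<in>ports. R x y \<longleftrightarrow> L ! idx x = L ! idx y)"

lemma corr0:
  assumes "t0 \<in> Valid" "t1 \<in> Valid" "t2 \<in> Valid"
  shows "corr (R0 (bsel t0 t1 t2)) (LL0 t0 t1 t2)"
  unfolding corr_def
proof (intro ballI)
  fix x y assume xy: "x \<in> ports" "y \<in> ports"
  obtain i p where x: "x = (i,p)" "i < 3" "p < 3" using ports_lt[OF xy(1)] by (cases x) auto
  obtain j q where y: "y = (j,q)" "j < 3" "q < 3" using ports_lt[OF xy(2)] by (cases y) auto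
  have "LL0 t0 t1 t2 ! idx x = LL0 t0 t1 t2 ! idx y \<longleftrightarrow> i = j \<and> lbl (bsel t0 t1 t2 i) p = lbl (bsel t0 t1 t2 j) q"
    using x y by (simp add: idx_def LL0_nth arith3 lbl_lt)
  also have "\<dots> \<longleftrightarrow> R0 (bsel t0 t1 t2) x y"
    using x y rel_lbl[OF bsel_valid[OF assms]] by (auto simp: R0_def)
  finally show "R0 (bsel t0 t1 t2) x y \<longleftrightarrow> LL0 t0 t1 t2 ! idx x = LL0 t0 t1 t2 ! idx y" by simp
qed

lemma corr_stp:
  assumes "corr R L" "length L = 9" "u \<in> ports" "v \<in> ports"
  shows "corr (stp s u v R) (relabL s (idx u) (idx v) L)"
proof (cases s)
  case False then show ?thesis using assms by (simp add: stp_def relabL_def)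
next
  case True
  show ?thesis unfolding corr_def
  proof (intro ballI)
    fix x y assume xy: "x \<in> ports" "y \<in> ports"
    have "relabL s (idx u) (idx v) L ! idx z = (if L ! idx z = L ! idx v then L ! idx u else L ! idx z)" if "z \<in> ports" for z
      using True idx_lt[OF that] assms(2) by (simp add: relabL_def relab2_def)
    then show "stp s u v R x y \<longleftrightarrow> relabL s (idx u) (idx v) L ! idx x = relabL s (idx u) (idx v) L ! idx y"
      using assms(1) xy assms(3,4) True unfolding corr_def stp_def insR_def by auto
  qed
qed

lemma P9: "(0::nat,1::nat) \<in> ports" "(1::nat,0::nat) \<in> ports" "(0::nat,2::nat) \<in> ports" "(2::nat,0::nat) \<in> ports"
    "(1::nat,2::nat) \<in> ports" "(2::nat,1::nat) \<in> ports" "(0::nat,0::nat) \<in> ports" "(1::nat,1::nat) \<in> ports"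
    "(2::nat,2::nat) \<in> ports" by (auto simp: ports_def)

lemma corrD: "corr R L \<Longrightarrow> x \<in> ports \<Longrightarrow> y \<in> ports \<Longrightarrow> R x y \<longleftrightarrow> L ! idx x = L ! idx y"
  unfolding corr_def by blast

lemma gextra_gres_LL:
  assumes "t0 \<in> Valid" "t1 \<in> Valid" "t2 \<in> Valid"
  shows "gextra (bsel t0 t1 t2) s1 s2 s3 = gextraLL t0 t1 t2 s1 s2 s3"
    "gres (bsel t0 t1 t2) s1 s2 s3 = gresLL t0 t1 t2 s1 s2 s3"
proof -
  let ?T = "bsel t0 t1 t2"
  have c0: "corr (R0 ?T) (LL0 t0 t1 t2)" by (rule corr0[OF assms])
  have c1: "corr (gR1 ?T s1) (LL1 t0 t1 t2 s1)"
    using corr_stp[OF c0 len_LL0 P9(1,2), of s1] unfolding gR1_def LL1_def idx_vals .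
  have c2: "corr (gR2 ?T s1 s2) (LL2 t0 t1 t2 s1 s2)"
    using corr_stp[OF c1 _ P9(3,4), of s2] unfolding gR2_def LL2_def idx_vals LL1_def len_relabL len_LL0 by simp
  have c3: "corr (gR3 ?T s1 s2 s3) (LL3 t0 t1 t2 s1 s2 s3)"
    using corr_stp[OF c2 _ P9(5,6), of s3] unfolding gR3_def LL3_def idx_vals LL2_def LL1_def len_relabL len_LL0 by simp
  have e0: "R0 ?T (0,1) (1,0) \<longleftrightarrow> eqi 1 3 (LL0 t0 t1 t2)"
    using corrD[OF c0 P9(1,2)] unfolding eqi_def idx_vals .
  have e1: "gR1 ?T s1 (0,2) (2,0) \<longleftrightarrow> eqi 2 6 (LL1 t0 t1 t2 s1)"
    using corrD[OF c1 P9(3,4)] unfolding eqi_def idx_vals .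
  have e2: "gR2 ?T s1 s2 (1,2) (2,1) \<longleftrightarrow> eqi 5 7 (LL2 t0 t1 t2 s1 s2)"
    using corrD[OF c2 P9(5,6)] unfolding eqi_def idx_vals .
  have e3: "gR3 ?T s1 s2 s3 (0,0) (1,1) \<longleftrightarrow> eqi 0 4 (LL3 t0 t1 t2 s1 s2 s3)"
    "gR3 ?T s1 s2 s3 (0,0) (2,2) \<longleftrightarrow> eqi 0 8 (LL3 t0 t1 t2 s1 s2 s3)"
    "gR3 ?T s1 s2 s3 (1,1) (2,2) \<longleftrightarrow> eqi 4 8 (LL3 t0 t1 t2 s1 s2 s3)"
    using corrD[OF c3 P9(7,8)] corrD[OF c3 P9(7,9)] corrD[OF c3 P9(8,9)] unfolding eqi_def idx_vals by auto
  show "gextra ?T s1 s2 s3 = gextraLL t0 t1 t2 s1 s2 s3"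
    unfolding gextra_def gextraLL_def e0 e1 e2 ..
  show "gres ?T s1 s2 s3 = gresLL t0 t1 t2 s1 s2 s3"
    unfolding gres_def gresLL_def resOf_def e3 eqi_def ..
qed

lemma sum_ind_allS:
  "(\<Sum>s1\<in>UNIV. \<Sum>s2\<in>UNIV. \<Sum>s3\<in>UNIV. if P s1 s2 s3 then 1 else (0::real))
     = real (length (filter (\<lambda>(s1,s2,s3). P s1 s2 s3) allS))"
  by (simp add: sumB allS_def)

lemma Gs_GnLL:
  assumes "t0 \<in> Valid" "t1 \<in> Valid" "t2 \<in> Valid"
  shows "Gs t0 t1 t2 t = real (GnLL t0 t1 t2 t)"
  unfolding Gs_def gextra_gres_LL[OF assms] GnLL_def by (rule sum_ind_allS)


lemma cnt_Suc_Gn: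
  "cnt (Suc n) t = (\<Sum>t0\<in>Valid. (\<Sum>t1\<in>Valid. (\<Sum>t2\<in>Valid. real (GnLL t0 t1 t2 t) * cnt n t2) * cnt n t1) * cnt n t0)"
  unfolding cnt_Suc by (intro sum.cong refl arg_cong2[where f = times]) (simp add: Gs_GnLL)

lemma rec_TTT:
  assumes "cnt n (True,True,True) = h" "cnt n (False,False,True) = a" "cnt n (True,False,False) = a"
    "cnt n (False,True,False) = a" "cnt n (False,False,False) = m"
  shows "cnt (Suc n) (True,True,True) = 3*h^3 + 12*h^2*a + 6*h*a^2"
  unfolding cnt_Suc_Gn sumV assms
  apply (simp only: tabs)
  apply (simp add: algebra_simps power2_eq_square power3_eq_cube)
  done

lemma rec_FFT:
  assumes "cnt n (True,True,True) = h" "cnt n (False,False,True) = a" "cnt n (True,False,False) = a"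
    "cnt n (False,True,False) = a" "cnt n (False,False,False) = m"
  shows "cnt (Suc n) (False,False,True) = h^3 + 12*h^2*a + 4*h^2*m + 28*h*a^2 + 8*h*a*m + 14*a^3 + 4*a^2*m"
  unfolding cnt_Suc_Gn sumV assms
  apply (simp only: tabs)
  apply (simp add: algebra_simps power2_eq_square power3_eq_cube)
  done

lemma rec_FFF:
  assumes "cnt n (True,True,True) = h" "cnt n (False,False,True) = a" "cnt n (True,False,False) = a"
    "cnt n (False,True,False) = a" "cnt n (False,False,False) = m"
  shows "cnt (Suc n) (False,False,False) = h^3 + 21*h^2*a + 12*h^2*m + 123*h*a^2 + 120*h*a*m + 24*h*m^2
                          + 173*a^3 + 204*a^2*m + 72*a*m^2 + 8*m^3"
  unfolding cnt_Suc_Gn sumV assms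
  apply (simp only: tabs)
  apply (simp add: algebra_simps power2_eq_square power3_eq_cube)
  done


lemma map_Cons_img: "map s ` Cons i ` X = Cons (s i) ` map s ` X"
  by (auto simp: image_image)

lemma sverts_perm:
  assumes "s ` {0,1,2} = {0,1,2}"
  shows "map s ` sverts n = sverts n"
proof (induction n)
  case 0 then show ?case by simp
next
  case (Suc n)
  have "map s ` sverts (Suc n) = (\<Union>i\<in>{0,1,2}. Cons (s i) ` sverts n)"
    by (simp add: image_Un map_Cons_img Suc)
  also have "\<dots> = (\<Union>j\<in>s ` {0,1,2}. Cons j ` sverts n)" by (simp add: SUP_image comp_def)
  also have "\<dots> = sverts (Suc n)" unfolding assms by simp
  finally show ?case .
qed

lemma imgE_UE: "imgE (map s) (UE I B) = UE (s ` I) (\<lambda>_. imgE (map s) E)" if "\<forall>i\<in>I. B i = E"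
proof -
  have "imgE (map s) (imgE (Cons i) E) = imgE (Cons (s i)) (imgE (map s) E)" for i
    unfolding imgE_def by (simp add: image_image)
  note h = this
  have "imgE (map s) (UE I B) = (\<Union>i\<in>I. imgE (map s) (imgE (Cons i) (B i)))"
    unfolding UE_def imgE_def by (rule image_UN)
  also have "\<dots> = (\<Union>i\<in>I. imgE (Cons (s i)) (imgE (map s) E))"
    using that h by (intro SUP_cong refl) simp
  also have "\<dots> = UE (s ` I) (\<lambda>_. imgE (map s) E)"
    unfolding UE_def by (simp add: SUP_image comp_def)
  finally show ?thesis .
qed

lemma bb_map: "map s ` bb n i j = bb n (s i) (s j)"
  by (simp add: bb_def)

lemma bb_sym: "bb n i j = bb n j i"
  by (simp add: bb_def insert_commute)

lemma sedges_perm: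
  assumes "s ` {0,1,2} = {0,1,2}"
    and "\<And>n. {bb n (s 0) (s 1), bb n (s 0) (s 2), bb n (s 1) (s 2)} = {bb n 0 1, bb n 0 2, bb n 1 2}"
  shows "imgE (map s) (sedges n) = sedges n"
proof (induction n)
  case 0 then show ?case by (simp add: imgE_def)
next
  case (Suc n)
  have "imgE (map s) (sedges (Suc n)) = imgE (map s) (UE {0,1,2} (\<lambda>_. sedges n)) \<union> imgE (map s) {bb n 0 1, bb n 0 2, bb n 1 2}"
    unfolding sedges_Suc imgE_def by (rule image_Un)
  also have "imgE (map s) (UE {0,1,2} (\<lambda>_. sedges n)) = UE {0,1,2} (\<lambda>_. sedges n)"
    using imgE_UE[of "{0,1,2}" "\<lambda>_. sedges n" "sedges n" s] Suc assms(1) by simp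
  also have "imgE (map s) {bb n 0 1, bb n 0 2, bb n 1 2} = {bb n 0 1, bb n 0 2, bb n 1 2}"
    using assms(2)[of n] by (simp add: imgE_def bb_map)
  finally show ?case by (simp add: sedges_Suc)
qed

lemma cnt_perm:
  assumes inv: "\<And>k. s (s k) = k" and s3: "s ` {0,1,2} = {0,1,2}"
    and bbs: "\<And>n. {bb n (s 0) (s 1), bb n (s 0) (s 2), bb n (s 1) (s 2)} = {bb n 0 1, bb n 0 2, bb n 1 2}"
  shows "cnt n t = (\<Sum>A\<in>Pow (sedges n). if tri n (imgE (map s) A) = t then wt n A else 0)"
proof -
  let ?f = "imgE (map s)"
  have injs: "inj s" using inv by (metis injI)
  then have injm: "inj (map s)" by simp
  have injf: "inj_on ?f (Pow (sedges n))"
    unfolding imgE_def by (rule inj_on_subset[OF inj_img[OF inj_img[OF injm]]]) simp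
  have img: "?f ` Pow (sedges n) = Pow (sedges n)"
    unfolding imgE_def by (rule image_Pow_surj) (use sedges_perm[OF s3 bbs] in \<open>simp add: imgE_def\<close>)
  have wtf: "wt n (?f A) = wt n A" for A
  proof -
    have "nu (sverts n) (?f A) = nu (map s ` sverts n) (?f A)" by (simp add: sverts_perm[OF s3])
    also have "\<dots> = nu (sverts n) A" by (rule nu_imgE[OF injm])
    finally show ?thesis by (simp add: wt_def)
  qed
  have "cnt n t = (\<Sum>A\<in>?f ` Pow (sedges n). if tri n A = t then wt n A else 0)"
    unfolding cnt_def img ..
  also have "\<dots> = (\<Sum>A\<in>Pow (sedges n). if tri n (?f A) = t then wt n (?f A) else 0)"
    using sum.reindex[OF injf, of "\<lambda>A. if tri n A = t then wt n A else 0"] by (simp add: comp_def)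
  finally show ?thesis unfolding wtf .
qed

lemma tri_perm:
  assumes inv: "\<And>k. s (s k) = k"
  shows "tri n (imgE (map s) A) = (connected_in A (replicate n (s 0)) (replicate n (s 1)),
     connected_in A (replicate n (s 0)) (replicate n (s 2)), connected_in A (replicate n (s 1)) (replicate n (s 2)))"
proof -
  have injm: "inj (map s)" using inv by (metis injI inj_map)
  have r: "replicate n p = map s (replicate n (s p))" for p by (simp add: inv)
  show ?thesis unfolding tri_def
    by (subst (1 2 3 4 5 6) r) (simp only: conn_imgE_iff[OF injm])
qed

definition sw :: "nat \<Rightarrow> nat \<Rightarrow> nat \<Rightarrow> nat" where
  "sw a b k = (if k = a then b else if k = b then a else k)"

lemma sw01: "\<And>k. sw 0 1 (sw 0 1 k) = k" "sw 0 1 ` {0,1,2} = {0,1,2}"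
  "\<And>n. {bb n (sw 0 1 0) (sw 0 1 1), bb n (sw 0 1 0) (sw 0 1 2), bb n (sw 0 1 1) (sw 0 1 2)} = {bb n 0 1, bb n 0 2, bb n 1 2}"
  by (auto simp: sw_def bb_sym)

lemma sw12: "\<And>k. sw 1 2 (sw 1 2 k) = k" "sw 1 2 ` {0,1,2} = {0,1,2}"
  "\<And>n. {bb n (sw 1 2 0) (sw 1 2 1), bb n (sw 1 2 0) (sw 1 2 2), bb n (sw 1 2 1) (sw 1 2 2)} = {bb n 0 1, bb n 0 2, bb n 1 2}"
proof -
  show "\<And>k. sw 1 2 (sw 1 2 k) = k" by (simp add: sw_def)
  show "sw 1 2 ` {0,1,2} = {0,1,2}" by (auto simp: sw_def)
  fix n
  have b: "bb n 2 1 = bb n 1 2" by (rule bb_sym)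
  have sv: "sw 1 2 0 = 0" "sw 1 2 1 = 2" "sw 1 2 2 = 1" by (simp_all add: sw_def)
  show "{bb n (sw 1 2 0) (sw 1 2 1), bb n (sw 1 2 0) (sw 1 2 2), bb n (sw 1 2 1) (sw 1 2 2)} = {bb n 0 1, bb n 0 2, bb n 1 2}"
    unfolding sv b by (rule insert_commute)
qed

lemma conn_sym_iff: "connected_in A x y \<longleftrightarrow> connected_in A y x"
  using conn_sym[of A x y] conn_sym[of A y x] by blast

lemma cnt_sym1: "cnt n (False,False,True) = cnt n (False,True,False)"
proof -
  have tp: "tri n (imgE (map (sw 0 1)) A) = (connected_in A (replicate n 1) (replicate n 0),
      connected_in A (replicate n 1) (replicate n 2), connected_in A (replicate n 0) (replicate n 2))" for A
  proof -
    have sv: "sw 0 1 0 = 1" "sw 0 1 1 = 0" "sw 0 1 2 = 2" by (simp_all add: sw_def)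
    show ?thesis using tri_perm[OF sw01(1), of n A] unfolding sv .
  qed
  have e: "tri n (imgE (map (sw 0 1)) A) = (False,False,True) \<longleftrightarrow> tri n A = (False,True,False)" for A
    unfolding tp unfolding tri_def using conn_sym_iff[of A "replicate n 1" "replicate n 0"] by auto
  have "cnt n (False,False,True) = (\<Sum>A\<in>Pow (sedges n). if tri n (imgE (map (sw 0 1)) A) = (False,False,True) then wt n A else 0)"
    by (rule cnt_perm[OF sw01])
  also have "\<dots> = cnt n (False,True,False)"
    unfolding cnt_def e ..
  finally show ?thesis .
qed

lemma cnt_sym2: "cnt n (False,True,False) = cnt n (True,False,False)"
proof -
  have tp: "tri n (imgE (map (sw 1 2)) A) = (connected_in A (replicate n 0) (replicate n 2),
      connected_in A (replicate n 0) (replicate n 1), connected_in A (replicate n 2) (replicate n 1))" for A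
  proof -
    have sv: "sw 1 2 0 = 0" "sw 1 2 1 = 2" "sw 1 2 2 = 1" by (simp_all add: sw_def)
    show ?thesis using tri_perm[OF sw12(1), of n A] unfolding sv .
  qed
  have e: "tri n (imgE (map (sw 1 2)) A) = (False,True,False) \<longleftrightarrow> tri n A = (True,False,False)" for A
    unfolding tp unfolding tri_def using conn_sym_iff[of A "replicate n 2" "replicate n 1"] by auto
  have "cnt n (False,True,False) = (\<Sum>A\<in>Pow (sedges n). if tri n (imgE (map (sw 1 2)) A) = (False,True,False) then wt n A else 0)"
    by (rule cnt_perm[OF sw12])
  also have "\<dots> = cnt n (True,False,False)"
    unfolding cnt_def e ..
  finally show ?thesis .
qed


lemma tweight_wt: "A \<subseteq> sedges n \<Longrightarrow> tweight (sverts n) (sedges n) A 2 1 = wt n A"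
  unfolding wt_def
  by (rule tweight_21[OF finite_sverts finite_subset[OF _ finite_sedges] edges_in_subset[OF edges_in_sedges]])

lemma sum_filter_Pow:
  "finite E \<Longrightarrow> (\<Sum>A | A \<subseteq> E \<and> P A. f A) = (\<Sum>A\<in>Pow E. if P A then f A else 0)"
proof -
  assume "finite E"
  have "{A. A \<subseteq> E \<and> P A} = {A \<in> Pow E. P A}" by auto
  then show ?thesis using sum.inter_filter[of "Pow E" f P] \<open>finite E\<close> by simp
qed

lemma tri_TTT: "tri n A = (True,True,True) \<longleftrightarrow> connected_in A (top_v n) (left_v n) \<and> connected_in A (top_v n) (right_v n)"
  unfolding tri_def top_v_def left_v_def right_v_def
  using conn_trans[OF conn_sym[of A "replicate n 0" "replicate n 1"], of "replicate n 2"] by auto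

lemma tri_FFT: "tri n A = (False,False,True) \<longleftrightarrow> connected_in A (left_v n) (right_v n) \<and> \<not> connected_in A (top_v n) (left_v n)"
  unfolding tri_def top_v_def left_v_def right_v_def
  using conn_trans[of A "replicate n 0" "replicate n 2" "replicate n 1"] conn_sym[of A "replicate n 1" "replicate n 2"] by auto

lemma tri_FFF: "tri n A = (False,False,False) \<longleftrightarrow> \<not> connected_in A (top_v n) (left_v n) \<and> \<not> connected_in A (top_v n) (right_v n)
   \<and> \<not> connected_in A (left_v n) (right_v n)"
  unfolding tri_def top_v_def left_v_def right_v_def by auto

lemma H2_cnt: "H2 n 2 1 = cnt n (True,True,True)"
  unfolding H2_def sum_filter_Pow[OF finite_sedges] cnt_def
  by (intro sum.cong refl) (simp add: tweight_wt tri_TTT)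

lemma N_cnt: "N n 2 1 = cnt n (False,False,True)"
  unfolding N_def H1_def sum_filter_Pow[OF finite_sedges] cnt_def
  by (simp, intro sum.cong refl) (simp add: tweight_wt tri_FFT)

lemma M_cnt: "M n 2 1 = cnt n (False,False,False)"
  unfolding M_def H0_def sum_filter_Pow[OF finite_sedges] cnt_def
  by (simp, intro sum.cong refl) (simp add: tweight_wt tri_FFF)

lemma H_wt: "H n 2 1 = (\<Sum>A\<in>Pow (sedges n). wt n A)"
  unfolding H_def tutte_def by (intro sum.cong refl) (simp add: tweight_wt)

lemma H_cnt: "H n 2 1 = cnt n (True,True,True) + cnt n (False,False,True) + cnt n (True,False,False)
   + cnt n (False,True,False) + cnt n (False,False,False)"
  using group_sum[of n "\<lambda>_. 1"] unfolding H_wt sumV by simp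

lemma card_forests: "real (card (spanning_forests (sedges n))) = (\<Sum>A\<in>Pow (sedges n). wt n A)"
proof -
  have "spanning_forests (sedges n) = {A \<in> Pow (sedges n). nu (sverts n) A = 0}"
  proof -
    have "\<not> has_cycle A \<longleftrightarrow> nu (sverts n) A = 0" if "A \<subseteq> sedges n" for A
      using has_cycle_nu[OF finite_sverts finite_subset[OF that finite_sedges] edges_in_subset[OF edges_in_sedges that]]
        nu_sedges_nonneg[OF that] by auto
    then show ?thesis unfolding spanning_forests_def by auto
  qed
  then have "card (spanning_forests (sedges n)) = (\<Sum>A\<in>Pow (sedges n). if nu (sverts n) A = 0 then 1 else 0)"
    using sum.inter_filter[of "Pow (sedges n)" "\<lambda>_. 1::nat" "\<lambda>A. nu (sverts n) A = 0"] finite_sedges by simp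
  then show ?thesis unfolding wt_def by (simp add: of_nat_sum) (rule sum.cong, simp_all)
qed

lemma cnt0: "cnt 0 t = (if t = (True,True,True) then 1 else 0)"
proof -
  have "tri 0 {} = (True,True,True)" by (simp add: tri_def)
  moreover have "wt 0 {} = 1" by (simp add: wt_def nu_empty)
  ultimately show ?thesis by (simp add: cnt_def)
qed

lemma symN: "cnt n (True,False,False) = cnt n (False,False,True)" "cnt n (False,True,False) = cnt n (False,False,True)"
  using cnt_sym1[of n] cnt_sym2[of n] by simp_all

theorem proposition4p9:
  shows "(\<forall>n\<ge>1. real (card (spanning_forests (sedges n))) = H n 2 1
            \<and> H n 2 1 = H2 n 2 1 + 3 * N n 2 1 + M n 2 1)
    \<and> (\<forall>n\<ge>1. let h = H2 n 2 1; a = N n 2 1; m = M n 2 1 in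
          H2 (Suc n) 2 1 = 3*h^3 + 12*h^2*a + 6*h*a^2
        \<and> N (Suc n) 2 1 = h^3 + 12*h^2*a + 4*h^2*m + 28*h*a^2 + 8*h*a*m + 14*a^3 + 4*a^2*m
        \<and> M (Suc n) 2 1 = h^3 + 21*h^2*a + 12*h^2*m + 123*h*a^2 + 120*h*a*m + 24*h*m^2
                          + 173*a^3 + 204*a^2*m + 72*a*m^2 + 8*m^3)
    \<and> H2 1 2 1 = 3 \<and> N 1 2 1 = 1 \<and> M 1 2 1 = 1"
proof (intro conjI allI impI)
  fix n :: nat
  show "real (card (spanning_forests (sedges n))) = H n 2 1" by (simp add: card_forests H_wt)
  show "H n 2 1 = H2 n 2 1 + 3 * N n 2 1 + M n 2 1" by (simp add: H_cnt H2_cnt N_cnt M_cnt symN)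
next
  fix n :: nat
  have c: "cnt n (True,True,True) = H2 n 2 1" "cnt n (False,False,True) = N n 2 1"
    "cnt n (True,False,False) = N n 2 1" "cnt n (False,True,False) = N n 2 1" "cnt n (False,False,False) = M n 2 1"
    by (simp_all add: H2_cnt N_cnt M_cnt symN)
  show "let h = H2 n 2 1; a = N n 2 1; m = M n 2 1 in
          H2 (Suc n) 2 1 = 3*h^3 + 12*h^2*a + 6*h*a^2
        \<and> N (Suc n) 2 1 = h^3 + 12*h^2*a + 4*h^2*m + 28*h*a^2 + 8*h*a*m + 14*a^3 + 4*a^2*m
        \<and> M (Suc n) 2 1 = h^3 + 21*h^2*a + 12*h^2*m + 123*h*a^2 + 120*h*a*m + 24*h*m^2
                          + 173*a^3 + 204*a^2*m + 72*a*m^2 + 8*m^3"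
    unfolding Let_def H2_cnt[of "Suc n"] N_cnt[of "Suc n"] M_cnt[of "Suc n"]
    using rec_TTT[OF c] rec_FFT[OF c] rec_FFF[OF c] by simp
next
  have c: "cnt 0 (True,True,True) = 1" "cnt 0 (False,False,True) = 0"
    "cnt 0 (True,False,False) = 0" "cnt 0 (False,True,False) = 0" "cnt 0 (False,False,False) = 0"
    by (simp_all add: cnt0)
  show "H2 1 2 1 = 3" using rec_TTT[OF c] by (simp add: H2_cnt)
  show "N 1 2 1 = 1" using rec_FFT[OF c] by (simp add: N_cnt)
  show "M 1 2 1 = 1" using rec_FFF[OF c] by (simp add: M_cnt)
qed


end
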